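(* Let $\lambda\in\Lambda$ with associated $T_\lambda>100$. Let $\psi\in C^\infty([0,\infty))$ with $0\le\psi\le1$, $\psi(x)=0$ for $x\le T_\lambda$ and $\psi(x)=1$ for $x\ge 2T_\lambda$. Define, for $t>0$ (with $H(t)=0$ for $t\le T_\lambda$), $$H(t)=4\Big(\big(\log 2-\tfrac12\big)\lambda''(t)+\int_t^{2t}\frac{\lambda''(s)-\lambda''(t)}{s-t}ds+\lambda''(t)\log\Big(\frac{t}{\lambda(t)}\Big)+\int_{2t}^\infty\frac{\lambda''(s)}{s-t}ds-\frac{\lambda'(t)^2}{2\lambda(t)}\Big)\psi(t),$$ and $\widehat{v_{2,0}}(\xi)=\frac{-1}{\pi\xi}\int_0^\infty H(t)\sin(t\xi)\,dt$ for $\xi>0$. Then for every $k\ge0$ and $N\ge1$ there are constants $C_k,C_{k,N}$ such that $$\xi^k|\widehat{v_{2,0}}^{(k)}(\xi)|\le\begin{cases}C_k\displaystyle\int_{100}^{1/\xi}\frac{\lambda(\sigma)\log(\sigma)}{\sigma}d\sigma+C_k\lambda(\tfrac1\xi)\log(\tfrac1\xi), & \xi\le\frac1{100},\\[2mm] \dfrac{C_{k,N}}{\xi^N}, & \xi>\frac1{100}.\end{cases}$$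
   Context: $\Lambda$ is the set of positive $\lambda\in C^\infty((50,\infty))$ for which there exist $T_\lambda>100$, constants $C_l,C_u,C_2\ge0$ and $C_k\ge0$ ($k\ge3$) such that for all $t\ge T_\lambda$: $-\frac{C_l}{t}\le\frac{\lambda'(t)}{\lambda(t)}\le\frac{C_u}{t}$ and $\frac{|\lambda^{(k)}(t)|}{\lambda(t)}\le\frac{C_k}{t^k}$ for $k\ge2$; and, with $M=\max\{C_l,C_u\}$: (i) $0\le C_u<\frac1{30}-\frac{C_l}{5}$; (ii) $\sqrt{C_\rho}\cdot\frac{179}{267}\Big(M(1+2\|\mathcal K\|_{\mathcal L(L^2_\rho)})+M^2\big(\frac14+2\|[\xi\partial_\xi,\mathcal K]\|_{\mathcal L(L^2_\rho)}+\|\mathcal K\|^2_{\mathcal L(L^2_\rho)}\big)+C_2\big(\frac12+\|\mathcal K\|_{\mathcal L(L^2_\rho)}\big)+4\big(M^2+\frac{C_2}{3}(3+2\pi^2)\big)\Big)<\frac13$; (iii) $M<\frac{1}{3\sqrt{C_\rho}}\cdot\frac{1513}{1044}\cdot\frac{1}{1+2\|\mathcal K\|_{\mathcal L(L^{2,1/2}_\rho)}}$. Here $\mathcal K$ is the Krieger–Schlag–Tataru transference operator (defined by $\mathcal{F}(R\partial_Ru)=-2\xi\partial_\xi\mathcal F u+\mathcal K\mathcal F u$) for the distorted Fourier transform $\mathcal F$ associated with $-\partial_R^2+\frac{3}{4R^2}-\frac{8}{(1+R^2)^2}$ on $L^2((0,\infty),dR)$, with spectral density $\rho$; $L^{2,\alpha}_\rho$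 has norm $\|f\langle\xi\rangle^\alpha\sqrt\rho\|_{L^2(d\xi)}$, $L^2_\rho=L^{2,0}_\rho$; and $C_\rho>0$ is a fixed constant with $\rho(y)/\rho(z)\le C_\rho(y/z+z/y)$ for all $y,z>0$. *)

theory Defs
  imports "HOL-Analysis.Analysis"
begin

definition nderiv :: "nat \<Rightarrow> (real \<Rightarrow> real) \<Rightarrow> real \<Rightarrow> real" where
  "nderiv k f = (deriv ^^ k) f"

definition smooth_on :: "real set \<Rightarrow> (real \<Rightarrow> real) \<Rightarrow> bool" where
  "smooth_on S f \<longleftrightarrow> (\<forall>k. \<forall>x\<in>S. nderiv k f differentiable (at x))"

text \<open>The operator norms of the KST transference operator and the constant C_rho
  are not formalized; they are passed as real parameters
  nK = norm of K on L^2_rho, nComm = norm of the commutator [xi d_xi, K] on L^2_rho,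
  nK12 = norm of K on L^{2,1/2}_rho, Crho = C_rho.\<close>
definition in_Lambda ::
  "real \<Rightarrow> real \<Rightarrow> real \<Rightarrow> real \<Rightarrow> (real \<Rightarrow> real) \<Rightarrow> real \<Rightarrow> bool" where
  "in_Lambda nK nComm nK12 Crho lam T \<longleftrightarrow>
     (\<forall>t>50. lam t > 0) \<and> smooth_on {50<..} lam \<and> T > 100 \<and>
     (\<exists>Cl Cu C2 (C :: nat \<Rightarrow> real).
        Cl \<ge> 0 \<and> Cu \<ge> 0 \<and> C2 \<ge> 0 \<and> (\<forall>k\<ge>3. C k \<ge> 0) \<and> C 2 = C2 \<and>
        (\<forall>t\<ge>T. - Cl / t \<le> nderiv 1 lam t / lam t \<and> nderiv 1 lam t / lam t \<le> Cu / t) \<and>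
        (\<forall>k\<ge>2. \<forall>t\<ge>T. \<bar>nderiv k lam t\<bar> / lam t \<le> C k / t ^ k) \<and>
        (let M = max Cl Cu in
          Cu < 1/30 - Cl/5 \<and>
          sqrt Crho * (179/267) *
            (M * (1 + 2 * nK) + M\<^sup>2 * (1/4 + 2 * nComm + nK\<^sup>2) + C2 * (1/2 + nK)
             + 4 * (M\<^sup>2 + C2/3 * (3 + 2 * pi\<^sup>2))) < 1/3 \<and>
          M < 1 / (3 * sqrt Crho) * (1513/1044) * (1 / (1 + 2 * nK12))))"

definition H_fun :: "(real \<Rightarrow> real) \<Rightarrow> (real \<Rightarrow> real) \<Rightarrow> real \<Rightarrow> real \<Rightarrow> real" where
  "H_fun lam psi T t =
     (if t \<le> T then 0 else
      4 * ((ln 2 - 1/2) * nderiv 2 lam t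
           + integral {t..2*t} (\<lambda>s. (nderiv 2 lam s - nderiv 2 lam t) / (s - t))
           + nderiv 2 lam t * ln (t / lam t)
           + integral {2*t..} (\<lambda>s. nderiv 2 lam s / (s - t))
           - (nderiv 1 lam t)\<^sup>2 / (2 * lam t)) * psi t)"

definition v20_hat :: "(real \<Rightarrow> real) \<Rightarrow> (real \<Rightarrow> real) \<Rightarrow> real \<Rightarrow> real \<Rightarrow> real" where
  "v20_hat lam psi T xi = - 1 / (pi * xi) * integral {0..} (\<lambda>t. H_fun lam psi T t * sin (t * xi))"

end

theory Submission
  imports Defs
begin

lemma nderiv_0[simp]: "nderiv 0 f = f" by (simp add: nderiv_def)
lemma nderiv_Suc: "nderiv (Suc k) f = nderiv k (deriv f)"
  unfolding nderiv_def funpow_Suc_right by simp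
lemma nderiv_Suc': "nderiv (Suc k) f = deriv (nderiv k f)"
  by (simp add: nderiv_def)
lemma nderiv_plus: "nderiv (i + j) f = nderiv i (nderiv j f)"
  by (simp add: nderiv_def funpow_add)

lemma nderiv_local:
  assumes "open S" "\<And>x. x \<in> S \<Longrightarrow> f x = g x" "x \<in> S"
  shows "nderiv k f x = nderiv k g x"
  using assms(2,3)
proof (induction k arbitrary: f g x)
  case 0 then show ?case by simp
next
  case (Suc k)
  have "\<And>y. y \<in> S \<Longrightarrow> deriv f y = deriv g y"
  proof -
    fix y assume y: "y \<in> S"
    have "eventually (\<lambda>z. z \<in> S) (nhds y)" using assms(1) y by (simp add: eventually_nhds_in_open)
    then have "eventually (\<lambda>z. f z = g z) (nhds y)" by (rule eventually_mono) (use Suc.prems in auto)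
    then show "deriv f y = deriv g y" by (rule deriv_cong_ev) simp
  qed
  then show ?case unfolding nderiv_Suc using Suc by blast
qed

lemma differentiable_local:
  fixes f g :: "real \<Rightarrow> real"
  assumes "open S" "\<And>x. x \<in> S \<Longrightarrow> f x = g x" "x \<in> S" "f differentiable (at x)"
  shows "g differentiable (at x)"
proof -
  obtain D where "(f has_real_derivative D) (at x)"
    using assms(4) by (auto simp: real_differentiable_def)
  then have "(g has_real_derivative D) (at x)"
    by (rule has_field_derivative_transform_within_open[OF _ assms(1,3)]) (use assms(2) in auto)
  then show ?thesis by (auto simp: real_differentiable_def)
qed

lemma differentiable_local':
  fixes f g :: "real \<Rightarrow> real"
  assumes "f differentiable (at x)" "open S" "\<And>x. x \<in> S \<Longrightarrow> f x = g x" "x \<in> S"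
  shows "g differentiable (at x)"
  using differentiable_local[OF assms(2,3,4,1)] .

lemma smooth_local:
  assumes "open S" "\<And>x. x \<in> S \<Longrightarrow> f x = g x" "smooth_on S f"
  shows "smooth_on S g"
  unfolding smooth_on_def
proof (intro allI ballI)
  fix k x assume x: "x \<in> S"
  show "nderiv k g differentiable (at x)"
    by (rule differentiable_local[OF assms(1) _ x, of "nderiv k f"])
       (use nderiv_local[OF assms(1,2)] assms(3) x in \<open>auto simp: smooth_on_def\<close>)
qed

lemma smooth_subset: "smooth_on S f \<Longrightarrow> S' \<subseteq> S \<Longrightarrow> smooth_on S' f"
  by (auto simp: smooth_on_def)

lemma smooth_deriv: "smooth_on S f \<Longrightarrow> smooth_on S (deriv f)"
  unfolding smooth_on_def by (metis nderiv_Suc)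

lemma smooth_nderiv: "smooth_on S f \<Longrightarrow> smooth_on S (nderiv j f)"
  unfolding smooth_on_def by (metis nderiv_plus)

lemma smooth_DERIV:
  assumes "smooth_on S f" "x \<in> S"
  shows "(nderiv k f has_real_derivative nderiv (Suc k) f x) (at x)"
proof -
  have "nderiv k f differentiable (at x)" using assms by (auto simp: smooth_on_def)
  then show ?thesis unfolding nderiv_Suc'
    by (simp add: DERIV_deriv_iff_real_differentiable)
qed

lemma smooth_DERIV0:
  assumes "smooth_on S f" "x \<in> S"
  shows "(f has_real_derivative deriv f x) (at x)"
  using smooth_DERIV[OF assms, of 0] by (simp add: nderiv_Suc)

lemma smooth_cont:
  assumes "smooth_on S f" "x \<in> S"
  shows "isCont (nderiv k f) x"
  using smooth_DERIV[OF assms] by (rule DERIV_isCont)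

lemma smooth_cont_on:
  assumes "smooth_on S f" "A \<subseteq> S"
  shows "continuous_on A (nderiv k f)"
  using smooth_cont[OF assms(1)] assms(2) by (meson continuous_at_imp_continuous_on subsetD)

lemma smooth_from_deriv:
  assumes "open S" "\<And>x. x \<in> S \<Longrightarrow> (f has_real_derivative g x) (at x)" "smooth_on S g"
  shows "smooth_on S f" "\<And>x. x \<in> S \<Longrightarrow> nderiv (Suc k) f x = nderiv k g x"
proof -
  have dg: "\<And>x. x \<in> S \<Longrightarrow> deriv f x = g x" using assms(2) by (simp add: DERIV_imp_deriv)
  show eq: "\<And>x. x \<in> S \<Longrightarrow> nderiv (Suc k) f x = nderiv k g x" for k
    unfolding nderiv_Suc by (rule nderiv_local[OF assms(1)]) (use dg in auto)
  show "smooth_on S f" unfolding smooth_on_def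
  proof (intro allI ballI)
    fix k x assume x: "x \<in> S"
    show "nderiv k f differentiable (at x)"
    proof (cases k)
      case 0 then show ?thesis using assms(2)[OF x] by (auto simp: real_differentiable_def)
    next
      case (Suc k')
      show ?thesis unfolding Suc
        by (rule differentiable_local[OF assms(1) _ x, of "nderiv k' g"])
           (use eq assms(3) x in \<open>auto simp: smooth_on_def\<close>)
    qed
  qed
qed

lemma nderiv_lin:
  assumes "open S" "smooth_on S f" "smooth_on S g" "x \<in> S"
  shows "nderiv k (\<lambda>x. a * f x + b * g x) x = a * nderiv k f x + b * nderiv k g x"
  using assms(2-4)
proof (induction k arbitrary: f g x)
  case 0 then show ?case by simp
next
  case (Suc k)
  have "nderiv k (deriv (\<lambda>x. a * f x + b * g x)) x = nderiv k (\<lambda>x. a * deriv f x + b * deriv g x) x"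
  proof (rule nderiv_local[OF assms(1) _ Suc.prems(3)])
    fix y assume y: "y \<in> S"
    have "((\<lambda>x. a * f x + b * g x) has_real_derivative a * deriv f y + b * deriv g y) (at y)"
      using smooth_DERIV0[OF Suc.prems(1) y] smooth_DERIV0[OF Suc.prems(2) y]
      by (auto intro!: derivative_eq_intros)
    then show "deriv (\<lambda>x. a * f x + b * g x) y = a * deriv f y + b * deriv g y"
      by (rule DERIV_imp_deriv)
  qed
  also have "\<dots> = a * nderiv k (deriv f) x + b * nderiv k (deriv g) x"
    using Suc.IH[OF smooth_deriv[OF Suc.prems(1)] smooth_deriv[OF Suc.prems(2)] Suc.prems(3)] .
  finally show ?case by (simp add: nderiv_Suc)
qed

lemma smooth_lin:
  assumes "open S" "smooth_on S f" "smooth_on S g"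
  shows "smooth_on S (\<lambda>x. a * f x + b * g x)"
  unfolding smooth_on_def
proof (intro allI ballI)
  fix k x assume x: "x \<in> S"
  have "(\<lambda>x. a * nderiv k f x + b * nderiv k g x) differentiable (at x)"
    using assms x unfolding smooth_on_def by (auto intro!: derivative_intros)
  then show "nderiv k (\<lambda>x. a * f x + b * g x) differentiable (at x)"
    by (rule differentiable_local'[OF _ assms(1) _ x]) (use nderiv_lin[OF assms] in auto)
qed

lemma nderiv_const_fun: "nderiv k (\<lambda>x::real. c::real) = (\<lambda>x. if k = 0 then c else 0)"
proof (induction k)
  case (Suc k) then show ?case
    by (cases k) (auto simp: nderiv_Suc')
qed simp

lemma nderiv_const: "nderiv k (\<lambda>x::real. c::real) x = (if k = 0 then c else 0)"
  by (simp add: nderiv_const_fun)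

lemma smooth_const: "smooth_on S (\<lambda>x. c)"
proof -
  show ?thesis unfolding smooth_on_def nderiv_const_fun by simp
qed

lemma nderiv_id: "nderiv k (\<lambda>x. x) x = (if k = 0 then x else if k = 1 then 1 else 0)"
proof -
  have "deriv (\<lambda>x::real. x) = (\<lambda>x. 1)" by (rule ext) (rule DERIV_imp_deriv, auto intro!: derivative_eq_intros)
  then show ?thesis by (cases k) (auto simp: nderiv_Suc nderiv_const)
qed

lemma smooth_id: "smooth_on S (\<lambda>x. x)"
proof -
  have e: "nderiv k (\<lambda>x. x) = (\<lambda>x. if k = 0 then x else if k = 1 then 1 else 0)" for k
    using nderiv_id by auto
  show ?thesis unfolding smooth_on_def e
  proof (intro allI ballI)
    fix k x show "(\<lambda>x::real. if k = 0 then x else if k = 1 then 1 else 0) differentiable (at x)"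
      by (cases "k = 0"; cases "k = 1") auto
  qed
qed

lemma smooth_cmult: "open S \<Longrightarrow> smooth_on S f \<Longrightarrow> smooth_on S (\<lambda>x. a * f x)"
  using smooth_lin[of S f f a 0] by simp
lemma smooth_add: "open S \<Longrightarrow> smooth_on S f \<Longrightarrow> smooth_on S g \<Longrightarrow> smooth_on S (\<lambda>x. f x + g x)"
  using smooth_lin[of S f g 1 1] by simp
lemma smooth_diff: "open S \<Longrightarrow> smooth_on S f \<Longrightarrow> smooth_on S g \<Longrightarrow> smooth_on S (\<lambda>x. f x - g x)"
  using smooth_lin[of S f g 1 "-1"] by simp
lemma nderiv_cmult: "open S \<Longrightarrow> smooth_on S f \<Longrightarrow> x \<in> S \<Longrightarrow> nderiv k (\<lambda>x. a * f x) x = a * nderiv k f x"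
  using nderiv_lin[of S f f x k a 0] by simp
lemma nderiv_addf: "open S \<Longrightarrow> smooth_on S f \<Longrightarrow> smooth_on S g \<Longrightarrow> x \<in> S \<Longrightarrow> nderiv k (\<lambda>x. f x + g x) x = nderiv k f x + nderiv k g x"
  using nderiv_lin[of S f g x k 1 1] by simp
lemma nderiv_difff: "open S \<Longrightarrow> smooth_on S f \<Longrightarrow> smooth_on S g \<Longrightarrow> x \<in> S \<Longrightarrow> nderiv k (\<lambda>x. f x - g x) x = nderiv k f x - nderiv k g x"
  using nderiv_lin[of S f g x k 1 "-1"] by simp

definition smooth_upto :: "nat \<Rightarrow> real set \<Rightarrow> (real \<Rightarrow> real) \<Rightarrow> bool" where
  "smooth_upto n S f \<longleftrightarrow> (\<forall>i<n. \<forall>x\<in>S. nderiv i f differentiable (at x))"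

lemma smooth_upto_deriv: "smooth_upto (Suc n) S f \<Longrightarrow> smooth_upto n S (deriv f)"
  unfolding smooth_upto_def by (metis Suc_mono nderiv_Suc)

lemma smooth_upto_mono: "smooth_upto n S f \<Longrightarrow> m \<le> n \<Longrightarrow> smooth_upto m S f"
  unfolding smooth_upto_def by auto

lemma smooth_imp_upto: "smooth_on S f \<Longrightarrow> smooth_upto n S f"
  unfolding smooth_upto_def smooth_on_def by auto

lemma smooth_upto_DERIV:
  assumes "smooth_upto (Suc k) S f" "x \<in> S"
  shows "(nderiv k f has_real_derivative nderiv (Suc k) f x) (at x)"
proof -
  have "nderiv k f differentiable (at x)" using assms by (auto simp: smooth_upto_def)
  then show ?thesis unfolding nderiv_Suc'
    by (simp add: DERIV_deriv_iff_real_differentiable)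
qed

lemma Suc_choose': "Suc n choose k = (n choose k) + (if k = 0 then 0 else (n choose (k-1)))"
  by (cases k) simp_all

lemma leibniz_fin:
  assumes "open S" "smooth_upto k S f" "smooth_upto k S g" "x \<in> S"
  shows "nderiv k (\<lambda>x. f x * g x) x = (\<Sum>i = 0..k. real (k choose i) * nderiv i f x * nderiv (k-i) g x)"
  using assms(2-4)
proof (induction k arbitrary: x)
  case 0 then show ?case by simp
next
  case (Suc n z)
  have fn: "smooth_upto n S f" "smooth_upto n S g"
    using Suc.prems smooth_upto_mono by (metis le_SucI order_refl)+
  have *: "\<And>i y. i \<le> n \<Longrightarrow> y \<in> S \<Longrightarrow> (nderiv i f has_real_derivative nderiv (Suc i) f y) (at y)"
          "\<And>i y. i \<le> n \<Longrightarrow> y \<in> S \<Longrightarrow> (nderiv i g has_real_derivative nderiv (Suc i) g y) (at y)"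
    by (rule smooth_upto_DERIV; use Suc.prems smooth_upto_mono in force)+
  have sumeq: "(\<Sum>i = 0..n.
               real (n choose i) * (nderiv (Suc i) f z * nderiv (n-i) g z + nderiv (Suc (n-i)) g z * nderiv i f z)) =
            g z * nderiv (Suc n) f z + (\<Sum>i = 0..n. nderiv i f z * (real (Suc n choose i) * nderiv (Suc n - i) g z))"
    apply (simp add: Suc_choose' algebra_simps sum.distrib)
    apply (subst (4) sum_Suc_reindex)
    apply (auto simp: algebra_simps Suc_diff_le intro: sum.cong)
    done
  have dsum: "((\<lambda>w. \<Sum>i = 0..n. real (n choose i) * nderiv i f w * nderiv (n-i) g w) has_real_derivative
      (\<Sum>i = 0..n. real (n choose i) * (nderiv (Suc i) f z * nderiv (n-i) g z + nderiv (Suc (n-i)) g z * nderiv i f z))) (at z)"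
  proof (rule DERIV_sum)
    fix i assume i: "i \<in> {0..n}"
    have "((\<lambda>w. real (n choose i) * (nderiv i f w * nderiv (n-i) g w)) has_real_derivative
      real (n choose i) * (nderiv (Suc i) f z * nderiv (n-i) g z + nderiv (Suc (n-i)) g z * nderiv i f z)) (at z)"
      by (rule DERIV_cmult, rule DERIV_mult) (use i *[of _ z] Suc.prems(3) in auto)
    then show "((\<lambda>w. real (n choose i) * nderiv i f w * nderiv (n-i) g w) has_real_derivative
      real (n choose i) * (nderiv (Suc i) f z * nderiv (n-i) g z + nderiv (Suc (n-i)) g z * nderiv i f z)) (at z)"
      by (simp add: mult.assoc)
  qed
  have "(nderiv n (\<lambda>w. f w * g w) has_real_derivative
         (\<Sum>i = 0..Suc n. real (Suc n choose i) * nderiv i f z * nderiv (Suc n - i) g z))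
        (at z)"
  proof (rule has_field_derivative_transform_within_open[OF _ \<open>open S\<close> Suc.prems(3)])
    show "\<And>y. y \<in> S \<Longrightarrow> (\<Sum>i = 0..n. real (n choose i) * nderiv i f y * nderiv (n-i) g y) = nderiv n (\<lambda>w. f w * g w) y"
      using Suc.IH[OF fn] by simp
    have "(\<Sum>i = 0..Suc n. real (Suc n choose i) * nderiv i f z * nderiv (Suc n - i) g z)
       = g z * nderiv (Suc n) f z + (\<Sum>i = 0..n. nderiv i f z * (real (Suc n choose i) * nderiv (Suc n - i) g z))"
      by (subst sum.atLeast0_atMost_Suc) (simp add: algebra_simps)
    then show "((\<lambda>w. \<Sum>i = 0..n. real (n choose i) * nderiv i f w * nderiv (n-i) g w) has_real_derivative
         (\<Sum>i = 0..Suc n. real (Suc n choose i) * nderiv i f z * nderiv (Suc n - i) g z)) (at z)"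
      using dsum sumeq by (simp add: add.commute mult.commute)
  qed
  then show ?case
    unfolding nderiv_Suc'
    by (simp add: DERIV_imp_deriv)
qed

lemma smooth_upto_mult:
  assumes "open S" "smooth_upto n S f" "smooth_upto n S g"
  shows "smooth_upto n S (\<lambda>x. f x * g x)"
  unfolding smooth_upto_def
proof (intro allI impI ballI)
  fix k x assume k: "k < n" and x: "x \<in> S"
  have fk: "smooth_upto k S f" "smooth_upto k S g" using assms k smooth_upto_mono by (metis less_imp_le)+
  have "(\<lambda>x. \<Sum>i = 0..k. real (k choose i) * nderiv i f x * nderiv (k-i) g x) differentiable (at x)"
  proof -
    have "\<forall>i\<in>{0..k}. (\<lambda>x. real (k choose i) * nderiv i f x * nderiv (k-i) g x) differentiable (at x)"
    proof
      fix i assume i: "i \<in> {0..k}"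
      have "nderiv i f differentiable (at x)" "nderiv (k - i) g differentiable (at x)"
        using assms(2,3) k x i unfolding smooth_upto_def by auto
      then show "(\<lambda>x. real (k choose i) * nderiv i f x * nderiv (k-i) g x) differentiable (at x)"
        by (intro differentiable_mult differentiable_const)
    qed
    from differentiable_sum[OF finite_atLeastAtMost this] show ?thesis .
  qed
  then show "nderiv k (\<lambda>x. f x * g x) differentiable (at x)"
    by (rule differentiable_local'[OF _ assms(1) _ x]) (use leibniz_fin[OF assms(1) fk] in auto)
qed

lemma smooth_upto_all: "(\<And>n. smooth_upto n S f) \<Longrightarrow> smooth_on S f"
  unfolding smooth_upto_def smooth_on_def
proof (intro allI ballI)
  fix k x assume "\<And>n. \<forall>i<n. \<forall>x\<in>S. nderiv i f differentiable at x" "x \<in> S"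
  then show "nderiv k f differentiable at x" using lessI[of k] by blast
qed

lemma smooth_mult: "open S \<Longrightarrow> smooth_on S f \<Longrightarrow> smooth_on S g \<Longrightarrow> smooth_on S (\<lambda>x. f x * g x)"
  by (rule smooth_upto_all, rule smooth_upto_mult) (auto intro: smooth_imp_upto)

lemma leibniz:
  "open S \<Longrightarrow> smooth_on S f \<Longrightarrow> smooth_on S g \<Longrightarrow> x \<in> S \<Longrightarrow>
   nderiv k (\<lambda>x. f x * g x) x = (\<Sum>i = 0..k. real (k choose i) * nderiv i f x * nderiv (k-i) g x)"
  by (rule leibniz_fin) (auto intro: smooth_imp_upto)

lemma smooth_compose:
  assumes S: "open S" and V: "open V" and f: "smooth_on S f" and fS: "\<And>x. x \<in> S \<Longrightarrow> f x \<in> V"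
    and g: "smooth_on V g"
  shows "smooth_on S (\<lambda>x. g (f x))"
proof -
  have "\<forall>g. smooth_on V g \<longrightarrow> smooth_upto n S (\<lambda>x. g (f x))" for n
  proof (induction n)
    case 0 then show ?case by (simp add: smooth_upto_def)
  next
    case (Suc n)
    show ?case
    proof (intro allI impI)
      fix g assume g: "smooth_on V g"
      have dg: "\<And>y. y \<in> S \<Longrightarrow> deriv (\<lambda>x. g (f x)) y = deriv g (f y) * deriv f y"
      proof -
        fix y assume y: "y \<in> S"
        have "((\<lambda>x. g (f x)) has_real_derivative deriv g (f y) * deriv f y) (at y)"
          using DERIV_chain2[OF smooth_DERIV0[OF g fS[OF y]] smooth_DERIV0[OF f y]] .
        then show "deriv (\<lambda>x. g (f x)) y = deriv g (f y) * deriv f y" by (rule DERIV_imp_deriv)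
      qed
      have up: "smooth_upto n S (\<lambda>y. deriv g (f y) * deriv f y)"
        by (rule smooth_upto_mult[OF S]) (use Suc.IH smooth_deriv[OF g] smooth_imp_upto smooth_deriv[OF f] in auto)
      show "smooth_upto (Suc n) S (\<lambda>x. g (f x))"
        unfolding smooth_upto_def
      proof (intro allI impI ballI)
        fix i x assume i: "i < Suc n" and x: "x \<in> S"
        show "nderiv i (\<lambda>x. g (f x)) differentiable (at x)"
        proof (cases i)
          case 0
          then show ?thesis using DERIV_chain2[OF smooth_DERIV0[OF g fS[OF x]] smooth_DERIV0[OF f x]]
            by (auto simp: real_differentiable_def)
        next
          case (Suc i')
          have "nderiv i' (\<lambda>y. deriv g (f y) * deriv f y) differentiable (at x)"
            using up i x Suc by (auto simp: smooth_upto_def)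
          moreover have "\<And>y. y \<in> S \<Longrightarrow> nderiv i' (\<lambda>y. deriv g (f y) * deriv f y) y = nderiv i (\<lambda>x. g (f x)) y"
            unfolding Suc nderiv_Suc by (rule nderiv_local[OF S]) (use dg in auto)
          ultimately show ?thesis by (rule differentiable_local'[OF _ S _ x])
        qed
      qed
    qed
  qed
  then show ?thesis using g by (intro smooth_upto_all) auto
qed

lemma nderiv_powr:
  assumes "x > 0"
  shows "nderiv k (\<lambda>x. x powr a) x = (\<Prod>i<k. (a - real i)) * x powr (a - real k)"
  using assms
proof (induction k arbitrary: x)
  case 0 then show ?case by simp
next
  case (Suc k)
  have "nderiv (Suc k) (\<lambda>x. x powr a) x = deriv (\<lambda>x. (\<Prod>i<k. (a - real i)) * x powr (a - real k)) x"
    unfolding nderiv_Suc' by (rule deriv_cong_ev) (use Suc eventually_nhds_in_open[of "{0<..}" x] in \<open>auto elim!: eventually_mono\<close>)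
  also have "\<dots> = (\<Prod>i<k. (a - real i)) * ((a - real k) * x powr (a - real k - 1))"
    by (rule DERIV_imp_deriv) (use Suc.prems in \<open>auto intro!: derivative_eq_intros\<close>)
  finally show ?case by (simp add: algebra_simps)
qed

lemma smooth_powr: "smooth_on {0<..} (\<lambda>x. x powr a)"
  unfolding smooth_on_def
proof (intro allI ballI)
  fix k and x :: real assume x: "x \<in> {0<..}"
  have "((\<lambda>x. x powr (a - real k)) has_real_derivative (a - real k) * x powr (a - real k - 1)) (at x)"
    using x by (auto intro!: derivative_eq_intros)
  then have "(\<lambda>x. (\<Prod>i<k. (a - real i)) * x powr (a - real k)) differentiable (at x)"
    by (intro differentiable_mult differentiable_const) (auto simp: real_differentiable_def)
  then show "nderiv k (\<lambda>x. x powr a) differentiable (at x)"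
    by (rule differentiable_local'[of _ _ "{0<..}"]) (use x nderiv_powr in auto)
qed

lemma smooth_inverse: "smooth_on {0<..} (\<lambda>x. 1 / x)"
proof (rule smooth_local[OF _ _ smooth_powr[of "-1"]])
  fix x :: real assume "x \<in> {0<..}"
  then show "x powr -1 = 1 / x" by (simp add: powr_minus_divide)
qed simp

lemma smooth_ln: "smooth_on {0<..} (\<lambda>x. ln x)"
proof (rule smooth_from_deriv(1)[OF _ _ smooth_inverse])
  fix x :: real assume "x \<in> {0<..}"
  then show "((\<lambda>x. ln x) has_real_derivative 1 / x) (at x)"
    by (auto intro!: derivative_eq_intros)
qed simp

lemma integral_div_real: "integral S (\<lambda>t. g t / (c::real)) = integral S g / c"
  using integral_cmul[where c="1 / c" and f=g and S=S] by simp

lemma lip_bound: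
  fixes g g' :: "real \<Rightarrow> real"
  assumes "convex U" "\<And>x. x \<in> U \<Longrightarrow> (g has_real_derivative g' x) (at x)"
    "\<And>x. x \<in> U \<Longrightarrow> \<bar>g' x\<bar> \<le> B" "a \<in> U" "b \<in> U"
  shows "\<bar>g b - g a\<bar> \<le> B * \<bar>b - a\<bar>"
  using field_differentiable_bound[OF assms(1), of g g' B b a] assms
  by (auto intro: has_field_derivative_at_within)

lemma DUI:
  fixes f fx :: "real \<Rightarrow> real \<Rightarrow> real" and h :: "real \<Rightarrow> real" and S :: "real set"
  assumes U: "open U" "convex U" "x0 \<in> U"
    and d: "\<And>x t. x \<in> U \<Longrightarrow> t \<in> S \<Longrightarrow> ((\<lambda>x. f x t) has_real_derivative fx x t) (at x)"
    and fi: "\<And>x. x \<in> U \<Longrightarrow> f x integrable_on S"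
    and hi: "h integrable_on S"
    and b: "\<And>x t. x \<in> U \<Longrightarrow> t \<in> S \<Longrightarrow> \<bar>fx x t\<bar> \<le> h t"
  shows "fx x0 integrable_on S"
    "((\<lambda>x. integral S (f x)) has_real_derivative integral S (fx x0)) (at x0)"
proof -
  obtain X :: "nat \<Rightarrow> real" where X: "\<And>i. X i \<noteq> x0" "X \<longlonglongrightarrow> x0"
  proof
    show "\<And>i. x0 + 1 / real (Suc i) \<noteq> x0" by simp
    have "(\<lambda>i. x0 + 1 / real (Suc i)) \<longlonglongrightarrow> x0 + 0"
      by (intro tendsto_intros LIMSEQ_inverse_real_of_nat[unfolded inverse_eq_divide])
    then show "(\<lambda>i. x0 + 1 / real (Suc i)) \<longlonglongrightarrow> x0" by simp
  qed
  have main: "fx x0 integrable_on S \<and> (\<lambda>k. (integral S (f (X k)) - integral S (f x0)) / (X k - x0)) \<longlonglongrightarrow> integral S (fx x0)"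
    if X: "\<And>i. X i \<noteq> x0" "X \<longlonglongrightarrow> x0" for X
  proof -
    define q where "q k t = (if X k \<in> U then (f (X k) t - f x0 t) / (X k - x0) else 0)" for k t
    have evU: "eventually (\<lambda>k. X k \<in> U) sequentially"
      using X(2) U(1,3) by (simp add: tendsto_def)
    have qi: "q k integrable_on S" for k
    proof (cases "X k \<in> U")
      case True
      have "(\<lambda>t. f (X k) t - f x0 t) integrable_on S" using fi[OF True] fi[OF U(3)] by (rule integrable_diff)
      then have "(\<lambda>t. (f (X k) t - f x0 t) / (X k - x0)) integrable_on S"
        using integrable_on_cdivide_iff[of "X k - x0" "\<lambda>t. f (X k) t - f x0 t" S] X(1)[of k] by simp
      moreover have "q k = (\<lambda>t. (f (X k) t - f x0 t) / (X k - x0))" using True by (auto simp: q_def)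
      ultimately show ?thesis by simp
    next
      case False then have "q k = (\<lambda>t. 0)" by (auto simp: q_def)
      then show ?thesis by (simp add: integrable_0)
    qed
    have qb: "norm (q k t) \<le> h t" if t: "t \<in> S" for k t
    proof (cases "X k \<in> U")
      case True
      have "\<bar>f (X k) t - f x0 t\<bar> \<le> h t * \<bar>X k - x0\<bar>"
        by (rule lip_bound[OF U(2), of "\<lambda>x. f x t" "\<lambda>x. fx x t"]) (use d b t True U in auto)
      then show ?thesis using True X(1)[of k] by (simp add: q_def abs_divide divide_le_eq)
    next
      case False then show ?thesis using b[OF U(3) t] by (simp add: q_def)
    qed
    have qc: "(\<lambda>k. q k t) \<longlonglongrightarrow> fx x0 t" if t: "t \<in> S" for t
    proof -
      have "((\<lambda>y. (f y t - f x0 t) / (y - x0)) \<longlongrightarrow> fx x0 t) (at x0)"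
        using d[OF U(3) t] by (simp add: has_field_derivative_iff)
      then have "((\<lambda>y. (f y t - f x0 t) / (y - x0)) \<circ> X) \<longlonglongrightarrow> fx x0 t"
        using X by (auto simp: tendsto_at_iff_sequentially)
      then show ?thesis
        by (rule Lim_transform_eventually) (use evU in \<open>auto simp: q_def elim!: eventually_mono\<close>)
    qed
    have dc: "fx x0 integrable_on S" "(\<lambda>k. integral S (q k)) \<longlonglongrightarrow> integral S (fx x0)"
      using dominated_convergence[of q S h "fx x0"] qi hi qb qc by auto
    have "(\<lambda>k. integral S (q k)) \<longlonglongrightarrow> integral S (fx x0)" by (rule dc(2))
    then have "(\<lambda>k. (integral S (f (X k)) - integral S (f x0)) / (X k - x0)) \<longlonglongrightarrow> integral S (fx x0)"
    proof (rule Lim_transform_eventually)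
      show "\<forall>\<^sub>F k in sequentially. integral S (q k) = (integral S (f (X k)) - integral S (f x0)) / (X k - x0)"
        using evU
      proof (rule eventually_mono)
        fix k assume k: "X k \<in> U"
        have "q k = (\<lambda>t. (f (X k) t - f x0 t) / (X k - x0))" using k by (auto simp: q_def)
        then have "integral S (q k) = integral S (\<lambda>t. (f (X k) t - f x0 t) / (X k - x0))"
          by (simp only:)
        also have "\<dots> = integral S (\<lambda>t. f (X k) t - f x0 t) / (X k - x0)"
          by (rule integral_div_real)
        also have "\<dots> = (integral S (f (X k)) - integral S (f x0)) / (X k - x0)"
          using fi[OF k] fi[OF U(3)] by (simp add: integral_diff)
        finally show "integral S (q k) = (integral S (f (X k)) - integral S (f x0)) / (X k - x0)" .
      qed
    qed
    with dc(1) show ?thesis by simp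
  qed
  show "fx x0 integrable_on S" using main[OF X] by simp
  show "((\<lambda>x. integral S (f x)) has_real_derivative integral S (fx x0)) (at x0)"
    unfolding has_field_derivative_iff tendsto_at_iff_sequentially
    using main by (auto simp: o_def)
qed

lemma int_bound:
  fixes f g :: "real \<Rightarrow> real"
  assumes "continuous_on S f" "S \<in> sets lebesgue" "g integrable_on S" "\<And>x. x \<in> S \<Longrightarrow> \<bar>f x\<bar> \<le> g x"
  shows "f absolutely_integrable_on S"
proof -
  have "f integrable_on S"
    by (rule measurable_bounded_by_integrable_imp_integrable_real[OF continuous_imp_measurable_on_sets_lebesgue[OF assms(1,2)] assms(3,4,2)])
  then show ?thesis using absolutely_integrable_integrable_bound[of S f g] assms(3,4) by auto
qed

lemma int_abs_bound:
  fixes f g :: "real \<Rightarrow> real"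
  assumes "f integrable_on S" "g integrable_on S" "\<And>x. x \<in> S \<Longrightarrow> \<bar>f x\<bar> \<le> g x"
  shows "\<bar>integral S f\<bar> \<le> integral S g"
  using integral_norm_bound_integral[of f S g] assms by simp

lemma LIM_int:
  fixes f :: "real \<Rightarrow> real"
  assumes "f absolutely_integrable_on {a..}"
  shows "(\<lambda>n. integral {a..real n} f) \<longlonglongrightarrow> integral {a..} f"
proof -
  have fi: "f integrable_on {a..}" and ni: "(\<lambda>x. norm (f x)) integrable_on {a..}"
    using assms by (auto simp: absolutely_integrable_on_def)
  define fn where "fn n x = (if x \<in> {..real n} then f x else 0)" for n x
  have "(\<lambda>k. integral {a..} (fn k)) \<longlonglongrightarrow> integral {a..} f"
  proof (rule dominated_convergence(2)[OF _ ni])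
    show "fn k integrable_on {a..}" for k
    proof -
      have "{..real k} \<inter> {a..} = {a..real k}" by auto
      then have "f integrable_on {..real k} \<inter> {a..}" using integrable_on_subinterval[OF fi, of a "real k"] by auto
      then show ?thesis unfolding fn_def by (rule integrable_restrict_Int[THEN iffD2])
    qed
    show "norm (fn k x) \<le> norm (f x)" for k x by (simp add: fn_def)
    show "(\<lambda>k. fn k x) \<longlonglongrightarrow> f x" if "x \<in> {a..}" for x
    proof -
      obtain N where "real N \<ge> x" using real_arch_simple by blast
      then have "eventually (\<lambda>k. fn k x = f x) sequentially"
        unfolding eventually_sequentially fn_def by (intro exI[of _ N]) auto
      then have "eventually (\<lambda>k. f x = fn k x) sequentially" by (simp add: eq_commute)
      then show ?thesis by (rule Lim_transform_eventually[OF tendsto_const])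
    qed
  qed
  moreover have "integral {a..} (fn k) = integral {a..real k} f" for k
    unfolding fn_def integral_restrict_Int by (simp add: Int_commute atLeastAtMost_def)
  ultimately show ?thesis by simp
qed

lemma nderiv_mult_id:
  assumes "open S" "smooth_on S f" "x \<in> S"
  shows "nderiv j (\<lambda>t. t * f t) x = x * nderiv j f x + real j * nderiv (j - 1) f x"
  using assms(3)
proof (induction j arbitrary: x)
  case 0 then show ?case by simp
next
  case (Suc j)
  have "nderiv (Suc j) (\<lambda>t. t * f t) x = deriv (\<lambda>y. y * nderiv j f y + real j * nderiv (j - 1) f y) x"
    unfolding nderiv_Suc' by (rule deriv_cong_ev) (use Suc eventually_nhds_in_open[OF assms(1) Suc.prems] in \<open>auto elim!: eventually_mono\<close>)
  also have "\<dots> = (x * nderiv (Suc j) f x + 1 * nderiv j f x) + real j * nderiv (Suc (j - 1)) f x"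
    by (rule DERIV_imp_deriv, rule DERIV_add, rule DERIV_mult'[OF DERIV_ident smooth_DERIV[OF assms(2) Suc.prems]],
        rule DERIV_cmult, rule smooth_DERIV[OF assms(2) Suc.prems])
  also have "real j * nderiv (Suc (j - 1)) f x = real j * nderiv j f x" by (cases j) auto
  finally show ?case by (simp add: algebra_simps)
qed

locale fourier =
  fixes T :: real and w :: "real \<Rightarrow> real"
  assumes T_pos: "T > 0" and w_nonneg: "\<And>t. t \<ge> T \<Longrightarrow> w t \<ge> 0"
    and W_int: "(\<lambda>t. if T \<le> t then w t else 0) integrable_on {0..}"
    and w_lim: "(w \<longlongrightarrow> 0) at_top"
begin

definition W where "W t = (if T \<le> t then w t else 0)"

lemma W_nonneg: "W t \<ge> 0" by (simp add: W_def w_nonneg)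

lemma W_int': "(\<lambda>t. c * W t) integrable_on {0..}"
  using integrable_cmul[OF W_int, of c] by (simp add: W_def)

definition symF where
  "symF g \<longleftrightarrow> smooth_on UNIV g \<and> (\<forall>t<T. g t = 0) \<and> (\<forall>j. \<exists>c. \<forall>t\<ge>T. \<bar>nderiv j g t\<bar> \<le> c * w t / t ^ j)"

lemma symF_smooth: "symF g \<Longrightarrow> smooth_on UNIV g" by (simp add: symF_def)

lemma symF_zero:
  assumes "symF g" "t < T"
  shows "nderiv j g t = 0"
proof -
  have "nderiv j g t = nderiv j (\<lambda>x. 0) t"
    by (rule nderiv_local[of "{..<T}"]) (use assms in \<open>auto simp: symF_def\<close>)
  then show ?thesis by (simp add: nderiv_const)
qed

lemma symF_bnd:
  assumes "symF g"
  obtains c where "c \<ge> 0" "\<And>t. t \<ge> T \<Longrightarrow> \<bar>nderiv j g t\<bar> \<le> c * w t / t ^ j"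
proof -
  obtain c where c: "\<And>t. t \<ge> T \<Longrightarrow> \<bar>nderiv j g t\<bar> \<le> c * w t / t ^ j" using assms unfolding symF_def by blast
  show ?thesis
  proof (rule that[of "max c 0"])
    fix t assume t: "t \<ge> T"
    have "c * w t / t ^ j \<le> max c 0 * w t / t ^ j"
      using w_nonneg[OF t] T_pos t by (intro divide_right_mono mult_right_mono) auto
    then show "\<bar>nderiv j g t\<bar> \<le> max c 0 * w t / t ^ j" using c[OF t] by linarith
  qed simp
qed

lemma symF_bnd0:
  assumes "symF g"
  obtains c where "c \<ge> 0" "\<And>t. \<bar>g t\<bar> \<le> c * W t"
proof -
  obtain c where c: "c \<ge> 0" "\<And>t. t \<ge> T \<Longrightarrow> \<bar>nderiv 0 g t\<bar> \<le> c * w t / t ^ 0"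
    using symF_bnd[OF assms] by blast
  show ?thesis
  proof (rule that[OF c(1)])
    fix t show "\<bar>g t\<bar> \<le> c * W t"
      using c(2)[of t] assms by (cases "T \<le> t") (auto simp: W_def symF_def)
  qed
qed

lemma symF_deriv:
  assumes "symF g" shows "symF (deriv g)"
  unfolding symF_def
proof (intro conjI allI impI)
  show "smooth_on UNIV (deriv g)" using assms by (auto simp: symF_def intro: smooth_deriv)
  show "deriv g t = 0" if "t < T" for t using symF_zero[OF assms that, of 1] by (simp add: nderiv_Suc)
  fix j
  obtain c where c: "c \<ge> 0" "\<And>t. t \<ge> T \<Longrightarrow> \<bar>nderiv (Suc j) g t\<bar> \<le> c * w t / t ^ (Suc j)"
    using symF_bnd[OF assms] by blast
  show "\<exists>c. \<forall>t\<ge>T. \<bar>nderiv j (deriv g) t\<bar> \<le> c * w t / t ^ j"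
  proof (intro exI[of _ "c / T"] allI impI)
    fix t assume t: "T \<le> t"
    have "c * w t / t ^ (Suc j) = (c / t) * w t / t ^ j" using T_pos t by (simp add: field_simps)
    also have "\<dots> \<le> (c / T) * w t / t ^ j"
      using T_pos t c(1) w_nonneg[OF t]
      by (intro divide_right_mono mult_right_mono divide_left_mono) auto
    finally show "\<bar>nderiv j (deriv g) t\<bar> \<le> c / T * w t / t ^ j"
      using c(2)[OF t] by (simp add: nderiv_Suc)
  qed
qed

lemma symF_lin:
  assumes "symF f" "symF g" shows "symF (\<lambda>t. a * f t + b * g t)"
  unfolding symF_def
proof (intro conjI allI impI)
  show "smooth_on UNIV (\<lambda>t. a * f t + b * g t)" using assms smooth_lin[of UNIV f g a b] by (simp add: symF_def)
  show "a * f t + b * g t = 0" if "t < T" for t using assms that by (auto simp: symF_def)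
  fix j
  obtain c where c: "c \<ge> 0" "\<And>t. t \<ge> T \<Longrightarrow> \<bar>nderiv j f t\<bar> \<le> c * w t / t ^ j"
    using symF_bnd[OF assms(1)] by blast
  obtain d where d: "d \<ge> 0" "\<And>t. t \<ge> T \<Longrightarrow> \<bar>nderiv j g t\<bar> \<le> d * w t / t ^ j"
    using symF_bnd[OF assms(2)] by blast
  show "\<exists>c. \<forall>t\<ge>T. \<bar>nderiv j (\<lambda>t. a * f t + b * g t) t\<bar> \<le> c * w t / t ^ j"
  proof (intro exI[of _ "\<bar>a\<bar> * c + \<bar>b\<bar> * d"] allI impI)
    fix t assume t: "T \<le> t"
    have e: "nderiv j (\<lambda>t. a * f t + b * g t) t = a * nderiv j f t + b * nderiv j g t"
      using assms nderiv_lin[of UNIV f g t j a b] by (auto simp: symF_def)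
    have "\<bar>a * nderiv j f t + b * nderiv j g t\<bar> \<le> \<bar>a\<bar> * \<bar>nderiv j f t\<bar> + \<bar>b\<bar> * \<bar>nderiv j g t\<bar>"
      by (simp add: abs_mult[symmetric] abs_triangle_ineq)
    also have "\<dots> \<le> \<bar>a\<bar> * (c * w t / t ^ j) + \<bar>b\<bar> * (d * w t / t ^ j)"
      using c(2)[OF t] d(2)[OF t] by (intro add_mono mult_left_mono) auto
    finally show "\<bar>nderiv j (\<lambda>t. a * f t + b * g t) t\<bar> \<le> (\<bar>a\<bar> * c + \<bar>b\<bar> * d) * w t / t ^ j"
      unfolding e by (simp add: add_divide_distrib algebra_simps)
  qed
qed

lemma symF_tmul:
  assumes "symF g" shows "symF (\<lambda>t. t * deriv g t)"
  unfolding symF_def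
proof (intro conjI allI impI)
  have sg: "smooth_on UNIV (deriv g)" using assms by (auto simp: symF_def intro: smooth_deriv)
  show "smooth_on UNIV (\<lambda>t. t * deriv g t)" using sg by (intro smooth_mult smooth_id) auto
  show "t * deriv g t = 0" if "t < T" for t using symF_zero[OF assms that, of 1] by (simp add: nderiv_Suc)
  fix j
  obtain c where c: "c \<ge> 0" "\<And>t. t \<ge> T \<Longrightarrow> \<bar>nderiv (Suc j) g t\<bar> \<le> c * w t / t ^ (Suc j)"
    using symF_bnd[OF assms] by blast
  obtain d where d: "d \<ge> 0" "\<And>t. t \<ge> T \<Longrightarrow> \<bar>nderiv j g t\<bar> \<le> d * w t / t ^ j"
    using symF_bnd[OF assms] by blast
  show "\<exists>c. \<forall>t\<ge>T. \<bar>nderiv j (\<lambda>t. t * deriv g t) t\<bar> \<le> c * w t / t ^ j"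
  proof (intro exI[of _ "c + real j * d"] allI impI)
    fix t assume t: "T \<le> t"
    have e: "nderiv j (\<lambda>t. t * deriv g t) t = t * nderiv (Suc j) g t + real j * nderiv j g t"
    proof -
      have "nderiv j (\<lambda>t. t * deriv g t) t = t * nderiv j (deriv g) t + real j * nderiv (j - 1) (deriv g) t"
        by (rule nderiv_mult_id[OF _ sg]) auto
      moreover have "real j * nderiv (j - 1) (deriv g) t = real j * nderiv j g t"
        by (cases j) (auto simp: nderiv_Suc[symmetric])
      ultimately show ?thesis by (simp add: nderiv_Suc)
    qed
    have tp: "t > 0" using T_pos t by simp
    have "\<bar>t * nderiv (Suc j) g t + real j * nderiv j g t\<bar> \<le> t * \<bar>nderiv (Suc j) g t\<bar> + real j * \<bar>nderiv j g t\<bar>"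
      using abs_triangle_ineq[of "t * nderiv (Suc j) g t" "real j * nderiv j g t"] tp by (simp add: abs_mult)
    also have "\<dots> \<le> t * (c * w t / t ^ Suc j) + real j * (d * w t / t ^ j)"
      using c(2)[OF t] d(2)[OF t] tp by (intro add_mono mult_left_mono) auto
    also have "\<dots> = (c + real j * d) * w t / t ^ j" using tp by (simp add: field_simps)
    finally show "\<bar>nderiv j (\<lambda>t. t * deriv g t) t\<bar> \<le> (c + real j * d) * w t / t ^ j"
      unfolding e .
  qed
qed

definition E where "E g = (\<lambda>t. (-2) * g t + (-1) * (t * deriv g t))"

lemma symF_E: "symF g \<Longrightarrow> symF (E g)"
  unfolding E_def by (intro symF_lin symF_tmul)

lemma symF_cont: "symF g \<Longrightarrow> continuous_on A g"
  using smooth_cont_on[of UNIV g A 0] by (auto simp: symF_def)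

lemma symF_absint:
  assumes "symF g" "continuous_on UNIV k" "\<And>t. \<bar>k t\<bar> \<le> B"
  shows "(\<lambda>t. g t * k t) absolutely_integrable_on {0..}"
proof -
  obtain c where c: "c \<ge> 0" "\<And>t. \<bar>g t\<bar> \<le> c * W t" using symF_bnd0[OF assms(1)] by blast
  have B: "B \<ge> 0" using assms(3)[of 0] by linarith
  show ?thesis
  proof (rule int_bound[where g = "\<lambda>t. (B * c) * W t"])
    show "continuous_on {0..} (\<lambda>t. g t * k t)"
      using symF_cont[OF assms(1)] assms(2) by (auto intro!: continuous_intros intro: continuous_on_subset)
    show "(\<lambda>t. B * c * W t) integrable_on {0..}" by (rule W_int')
    fix t
    have "\<bar>g t * k t\<bar> = \<bar>g t\<bar> * \<bar>k t\<bar>" by (simp add: abs_mult)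
    also have "\<dots> \<le> (c * W t) * B" using c(2)[of t] assms(3)[of t] B by (intro mult_mono) auto
    finally show "\<bar>g t * k t\<bar> \<le> B * c * W t" by (simp add: algebra_simps)
  qed auto
qed

lemma symF_int_sin: "symF g \<Longrightarrow> (\<lambda>t. g t * sin (t * \<xi>)) absolutely_integrable_on {0..}"
  by (rule symF_absint[where B=1]) (auto intro!: continuous_intros)
lemma symF_int_cos: "symF g \<Longrightarrow> (\<lambda>t. g t * cos (t * \<xi>)) absolutely_integrable_on {0..}"
  by (rule symF_absint[where B=1]) (auto intro!: continuous_intros)
lemma symF_int_sin': "symF g \<Longrightarrow> (\<lambda>t. g t * sin (t * \<xi>)) integrable_on {0..}"
  using symF_int_sin by (auto simp: absolutely_integrable_on_def)
lemma symF_int_cos': "symF g \<Longrightarrow> (\<lambda>t. g t * cos (t * \<xi>)) integrable_on {0..}"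
  using symF_int_cos by (auto simp: absolutely_integrable_on_def)

definition Gs where "Gs g \<xi> = integral {0..} (\<lambda>t. g t * sin (t * \<xi>))"
definition Gc where "Gc g \<xi> = integral {0..} (\<lambda>t. g t * cos (t * \<xi>))"
definition V where "V g \<xi> = Gs g \<xi> / \<xi>"

lemma Gs_lin:
  assumes "symF p" "symF q"
  shows "Gs (\<lambda>t. a * p t + b * q t) \<xi> = a * Gs p \<xi> + b * Gs q \<xi>"
proof -
  have "Gs (\<lambda>t. a * p t + b * q t) \<xi> = integral {0..} (\<lambda>t. a * (p t * sin (t * \<xi>)) + b * (q t * sin (t * \<xi>)))"
    unfolding Gs_def by (simp add: algebra_simps)
  also have "\<dots> = a * Gs p \<xi> + b * Gs q \<xi>"
    unfolding Gs_def
  proof (subst integral_add)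
    show "(\<lambda>t. a * (p t * sin (t * \<xi>))) integrable_on {0..}"
      using integrable_cmul[OF symF_int_sin'[OF assms(1)], of a] by simp
    show "(\<lambda>t. b * (q t * sin (t * \<xi>))) integrable_on {0..}"
      using integrable_cmul[OF symF_int_sin'[OF assms(2)], of b] by simp
  qed simp
  finally show ?thesis .
qed

lemma V_lin:
  assumes "symF p" "symF q"
  shows "V (\<lambda>t. a * p t + b * q t) \<xi> = a * V p \<xi> + b * V q \<xi>"
  unfolding V_def Gs_lin[OF assms] by (simp add: add_divide_distrib)

lemma symF_lim:
  assumes "symF g" shows "(g \<longlongrightarrow> 0) at_top"
proof -
  obtain c where c: "c \<ge> 0" "\<And>t. \<bar>g t\<bar> \<le> c * W t" using symF_bnd0[OF assms] by blast
  have "eventually (\<lambda>t. norm (g t) \<le> c * w t) at_top"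
    using eventually_ge_at_top[of T]
  proof (rule eventually_mono)
    fix t assume "T \<le> t" then show "norm (g t) \<le> c * w t" using c(2)[of t] by (simp add: W_def)
  qed
  moreover have "((\<lambda>t. c * w t) \<longlongrightarrow> 0) at_top" using tendsto_mult_right_zero[OF w_lim] by simp
  ultimately show ?thesis by (rule Lim_null_comparison)
qed

lemma IBP_s:
  assumes g: "symF g" and xi: "\<xi> \<noteq> 0"
  shows "Gs g \<xi> = Gc (deriv g) \<xi> / \<xi>"
proof -
  have sg: "smooth_on UNIV g" using g by (simp add: symF_def)
  define \<phi> where "\<phi> t = g t * sin (t * \<xi>) - deriv g t * cos (t * \<xi>) / \<xi>" for t
  define F where "F t = - (g t * cos (t * \<xi>)) / \<xi>" for t
  have der: "(F has_real_derivative \<phi> t) (at t)" for t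
  proof -
    show ?thesis
      unfolding F_def \<phi>_def using smooth_DERIV0[OF sg, of t] xi
      by (auto intro!: derivative_eq_intros simp: field_simps)
  qed
  have F0: "F 0 = 0" using g T_pos by (simp add: F_def symF_def)
  have int_n: "integral {0..real n} \<phi> = F (real n)" for n
  proof -
    have "(\<phi> has_integral (F (real n) - F 0)) {0..real n}"
      by (rule fundamental_theorem_of_calculus)
         (auto intro: has_field_derivative_at_within der simp flip: has_real_derivative_iff_has_vector_derivative)
    then show ?thesis using F0 by (simp add: integral_unique)
  qed
  have phi_abs: "\<phi> absolutely_integrable_on {0..}"
  proof -
    obtain c1 where c1: "c1 \<ge> 0" "\<And>t. \<bar>g t\<bar> \<le> c1 * W t" using symF_bnd0[OF g] by blast
    obtain c2 where c2: "c2 \<ge> 0" "\<And>t. \<bar>deriv g t\<bar> \<le> c2 * W t" using symF_bnd0[OF symF_deriv[OF g]] by blast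
    show ?thesis
    proof (rule int_bound[where g = "\<lambda>t. (c1 + c2 / \<bar>\<xi>\<bar>) * W t"])
      show "continuous_on {0..} \<phi>"
        unfolding \<phi>_def using symF_cont[OF g] symF_cont[OF symF_deriv[OF g]] xi
        by (auto intro!: continuous_intros intro: continuous_on_subset)
      show "(\<lambda>t. (c1 + c2 / \<bar>\<xi>\<bar>) * W t) integrable_on {0..}" by (rule W_int')
      fix t
      have a: "\<bar>\<phi> t\<bar> \<le> \<bar>g t * sin (t * \<xi>)\<bar> + \<bar>deriv g t * cos (t * \<xi>) / \<xi>\<bar>"
        unfolding \<phi>_def by (rule abs_triangle_ineq4)
      have b: "\<bar>g t * sin (t * \<xi>)\<bar> \<le> \<bar>g t\<bar>" by (simp add: abs_mult mult_left_le)
      have c: "\<bar>deriv g t * cos (t * \<xi>) / \<xi>\<bar> \<le> \<bar>deriv g t\<bar> / \<bar>\<xi>\<bar>"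
        by (simp add: abs_mult mult_left_le divide_right_mono abs_divide)
      have d: "\<bar>deriv g t\<bar> / \<bar>\<xi>\<bar> \<le> c2 * W t / \<bar>\<xi>\<bar>"
        using c2(2)[of t] by (simp add: divide_right_mono)
      have "\<bar>\<phi> t\<bar> \<le> c1 * W t + c2 * W t / \<bar>\<xi>\<bar>"
        using a b c d c1(2)[of t] by linarith
      then show "\<bar>\<phi> t\<bar> \<le> (c1 + c2 / \<bar>\<xi>\<bar>) * W t" by (simp add: algebra_simps)
    qed auto
  qed
  have lim1: "(\<lambda>n. integral {0..real n} \<phi>) \<longlonglongrightarrow> integral {0..} \<phi>" by (rule LIM_int[OF phi_abs])
  have "((\<lambda>t. F t) \<longlongrightarrow> 0) at_top"
  proof (rule Lim_null_comparison)
    have "norm (F t) \<le> \<bar>g t\<bar> / \<bar>\<xi>\<bar>" for t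
    proof -
      have "\<bar>g t * cos (t * \<xi>)\<bar> \<le> \<bar>g t\<bar>" by (simp add: abs_mult mult_left_le)
      then show ?thesis unfolding F_def by (simp add: abs_divide divide_right_mono)
    qed
    then show "eventually (\<lambda>t. norm (F t) \<le> \<bar>g t\<bar> / \<bar>\<xi>\<bar>) at_top" by simp
    show "((\<lambda>t. \<bar>g t\<bar> / \<bar>\<xi>\<bar>) \<longlongrightarrow> 0) at_top"
      using tendsto_divide[OF tendsto_rabs[OF symF_lim[OF g]] tendsto_const[of "\<bar>\<xi>\<bar>"]] xi by simp
  qed
  then have "(\<lambda>n. F (real n)) \<longlonglongrightarrow> 0"
    by (rule filterlim_compose[OF _ filterlim_real_sequentially])
  then have lim2: "(\<lambda>n. integral {0..real n} \<phi>) \<longlonglongrightarrow> 0" by (simp add: int_n)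
  have "integral {0..} \<phi> = 0" using LIMSEQ_unique[OF lim1 lim2] .
  moreover have "integral {0..} \<phi> = Gs g \<xi> - Gc (deriv g) \<xi> / \<xi>"
  proof -
    have i1: "(\<lambda>t. g t * sin (t * \<xi>)) integrable_on {0..}" by (rule symF_int_sin'[OF g])
    have i2: "(\<lambda>t. deriv g t * cos (t * \<xi>) / \<xi>) integrable_on {0..}"
      using integrable_cmul[OF symF_int_cos'[OF symF_deriv[OF g]], of "1/\<xi>" \<xi>] by simp
    show ?thesis unfolding \<phi>_def Gs_def Gc_def integral_diff[OF i1 i2] integral_div_real ..
  qed
  ultimately show ?thesis by simp
qed

lemma IBP_c:
  assumes g: "symF g" and xi: "\<xi> \<noteq> 0"
  shows "Gc g \<xi> = - Gs (deriv g) \<xi> / \<xi>"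
proof -
  have sg: "smooth_on UNIV g" using g by (simp add: symF_def)
  define \<phi> where "\<phi> t = g t * cos (t * \<xi>) + deriv g t * sin (t * \<xi>) / \<xi>" for t
  define F where "F t = (g t * sin (t * \<xi>)) / \<xi>" for t
  have der: "(F has_real_derivative \<phi> t) (at t)" for t
    unfolding F_def \<phi>_def using smooth_DERIV0[OF sg, of t] xi
    by (auto intro!: derivative_eq_intros simp: field_simps)
  have F0: "F 0 = 0" by (simp add: F_def)
  have int_n: "integral {0..real n} \<phi> = F (real n)" for n
  proof -
    have "(\<phi> has_integral (F (real n) - F 0)) {0..real n}"
      by (rule fundamental_theorem_of_calculus)
         (auto intro: has_field_derivative_at_within der simp flip: has_real_derivative_iff_has_vector_derivative)
    then show ?thesis using F0 by (simp add: integral_unique)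
  qed
  have phi_abs: "\<phi> absolutely_integrable_on {0..}"
  proof -
    obtain c1 where c1: "c1 \<ge> 0" "\<And>t. \<bar>g t\<bar> \<le> c1 * W t" using symF_bnd0[OF g] by blast
    obtain c2 where c2: "c2 \<ge> 0" "\<And>t. \<bar>deriv g t\<bar> \<le> c2 * W t" using symF_bnd0[OF symF_deriv[OF g]] by blast
    show ?thesis
    proof (rule int_bound[where g = "\<lambda>t. (c1 + c2 / \<bar>\<xi>\<bar>) * W t"])
      show "continuous_on {0..} \<phi>"
        unfolding \<phi>_def using symF_cont[OF g] symF_cont[OF symF_deriv[OF g]] xi
        by (auto intro!: continuous_intros intro: continuous_on_subset)
      show "(\<lambda>t. (c1 + c2 / \<bar>\<xi>\<bar>) * W t) integrable_on {0..}" by (rule W_int')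
      fix t
      have a: "\<bar>\<phi> t\<bar> \<le> \<bar>g t * cos (t * \<xi>)\<bar> + \<bar>deriv g t * sin (t * \<xi>) / \<xi>\<bar>"
        unfolding \<phi>_def by (rule abs_triangle_ineq)
      have b: "\<bar>g t * cos (t * \<xi>)\<bar> \<le> \<bar>g t\<bar>" by (simp add: abs_mult mult_left_le)
      have c: "\<bar>deriv g t * sin (t * \<xi>) / \<xi>\<bar> \<le> \<bar>deriv g t\<bar> / \<bar>\<xi>\<bar>"
        by (simp add: abs_mult mult_left_le divide_right_mono abs_divide)
      have d: "\<bar>deriv g t\<bar> / \<bar>\<xi>\<bar> \<le> c2 * W t / \<bar>\<xi>\<bar>"
        using c2(2)[of t] by (simp add: divide_right_mono)
      have "\<bar>\<phi> t\<bar> \<le> c1 * W t + c2 * W t / \<bar>\<xi>\<bar>"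
        using a b c d c1(2)[of t] by linarith
      then show "\<bar>\<phi> t\<bar> \<le> (c1 + c2 / \<bar>\<xi>\<bar>) * W t" by (simp add: algebra_simps)
    qed auto
  qed
  have lim1: "(\<lambda>n. integral {0..real n} \<phi>) \<longlonglongrightarrow> integral {0..} \<phi>" by (rule LIM_int[OF phi_abs])
  have "((\<lambda>t. F t) \<longlongrightarrow> 0) at_top"
  proof (rule Lim_null_comparison)
    have "norm (F t) \<le> \<bar>g t\<bar> / \<bar>\<xi>\<bar>" for t
    proof -
      have "\<bar>g t * sin (t * \<xi>)\<bar> \<le> \<bar>g t\<bar>" by (simp add: abs_mult mult_left_le)
      then show ?thesis unfolding F_def by (simp add: abs_divide divide_right_mono)
    qed
    then show "eventually (\<lambda>t. norm (F t) \<le> \<bar>g t\<bar> / \<bar>\<xi>\<bar>) at_top" by simp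
    show "((\<lambda>t. \<bar>g t\<bar> / \<bar>\<xi>\<bar>) \<longlongrightarrow> 0) at_top"
      using tendsto_divide[OF tendsto_rabs[OF symF_lim[OF g]] tendsto_const[of "\<bar>\<xi>\<bar>"]] xi by simp
  qed
  then have "(\<lambda>n. F (real n)) \<longlonglongrightarrow> 0"
    by (rule filterlim_compose[OF _ filterlim_real_sequentially])
  then have lim2: "(\<lambda>n. integral {0..real n} \<phi>) \<longlonglongrightarrow> 0" by (simp add: int_n)
  have "integral {0..} \<phi> = 0" using LIMSEQ_unique[OF lim1 lim2] .
  moreover have "integral {0..} \<phi> = Gc g \<xi> + Gs (deriv g) \<xi> / \<xi>"
  proof -
    have i1: "(\<lambda>t. g t * cos (t * \<xi>)) integrable_on {0..}" by (rule symF_int_cos'[OF g])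
    have i2: "(\<lambda>t. deriv g t * sin (t * \<xi>) / \<xi>) integrable_on {0..}"
      using integrable_cmul[OF symF_int_sin'[OF symF_deriv[OF g]], of "1/\<xi>" \<xi>] by simp
    show ?thesis unfolding \<phi>_def Gs_def Gc_def integral_add[OF i1 i2] integral_div_real ..
  qed
  ultimately show ?thesis by (simp add: eq_neg_iff_add_eq_0)
qed

lemma Gc_deriv:
  assumes g: "symF g"
  shows "((\<lambda>\<xi>. Gc (deriv g) \<xi>) has_real_derivative - Gs (\<lambda>t. t * deriv g t) \<xi>0) (at \<xi>0)"
proof -
  obtain c where c: "c \<ge> 0" "\<And>t. \<bar>t * deriv g t\<bar> \<le> c * W t" using symF_bnd0[OF symF_tmul[OF g]] by blast
  have "((\<lambda>\<xi>. integral {0..} (\<lambda>t. deriv g t * cos (t * \<xi>))) has_real_derivative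
      integral {0..} (\<lambda>t. - (t * deriv g t * sin (t * \<xi>0)))) (at \<xi>0)"
  proof (rule DUI(2)[where U=UNIV and h="\<lambda>t. c * W t"])
    fix x t :: real
    show "((\<lambda>x. deriv g t * cos (t * x)) has_real_derivative - (t * deriv g t * sin (t * x))) (at x)"
      by (auto intro!: derivative_eq_intros simp: algebra_simps)
    show "\<bar>- (t * deriv g t * sin (t * x))\<bar> \<le> c * W t"
    proof -
      have "\<bar>- (t * deriv g t * sin (t * x))\<bar> = \<bar>t * deriv g t\<bar> * \<bar>sin (t * x)\<bar>" by (simp add: abs_mult)
      also have "\<dots> \<le> \<bar>t * deriv g t\<bar>" by (simp add: mult_left_le)
      finally show ?thesis using c(2)[of t] by linarith
    qed
  next
    fix x :: real show "(\<lambda>t. deriv g t * cos (t * x)) integrable_on {0..}"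
      by (rule symF_int_cos'[OF symF_deriv[OF g]])
  qed (auto intro: W_int')
  moreover have "integral {0..} (\<lambda>t. - (t * deriv g t * sin (t * \<xi>0))) = - Gs (\<lambda>t. t * deriv g t) \<xi>0"
    unfolding Gs_def by (simp only: integral_neg)
  ultimately show ?thesis unfolding Gc_def by simp
qed

lemma Gs_E:
  assumes g: "symF g"
  shows "Gs (E g) \<xi> = -2 * Gs g \<xi> - Gs (\<lambda>t. t * deriv g t) \<xi>"
  unfolding E_def using Gs_lin[OF g symF_tmul[OF g], of "-2" "-1" \<xi>] by simp

lemma V_deriv:
  assumes g: "symF g" and xi: "\<xi> > 0"
  shows "(V g has_real_derivative V (E g) \<xi> / \<xi>) (at \<xi>)"
proof -
  have e: "V g y = Gc (deriv g) y / y ^ 2" if "y \<in> {0<..}" for y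
    using IBP_s[OF g, of y] that by (simp add: V_def power2_eq_square)
  have "((\<lambda>y. Gc (deriv g) y / y ^ 2) has_real_derivative
        (- Gs (\<lambda>t. t * deriv g t) \<xi> * \<xi> ^ 2 - Gc (deriv g) \<xi> * (2 * \<xi>)) / (\<xi> ^ 2 * \<xi> ^ 2)) (at \<xi>)"
    using xi by (auto intro!: derivative_eq_intros Gc_deriv[OF g] simp: power2_eq_square)
  moreover have "(- Gs (\<lambda>t. t * deriv g t) \<xi> * \<xi> ^ 2 - Gc (deriv g) \<xi> * (2 * \<xi>)) / (\<xi> ^ 2 * \<xi> ^ 2)
      = V (E g) \<xi> / \<xi>"
  proof -
    have "Gc (deriv g) \<xi> = \<xi> * Gs g \<xi>" using IBP_s[OF g, of \<xi>] xi by simp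
    then show ?thesis unfolding V_def Gs_E[OF g] using xi by (simp add: field_simps power2_eq_square)
  qed
  ultimately have "((\<lambda>y. Gc (deriv g) y / y ^ 2) has_real_derivative V (E g) \<xi> / \<xi>) (at \<xi>)" by simp
  then show ?thesis
    by (rule has_field_derivative_transform_within_open[of _ _ _ "{0<..}"]) (use xi e in auto)
qed

lemma V_nderiv:
  "\<forall>g. symF g \<longrightarrow> (\<exists>p. symF p \<and> (\<forall>\<xi>>0. nderiv k (V g) \<xi> = V p \<xi> / \<xi> ^ k))"
proof (induction k)
  case 0 then show ?case by auto
next
  case (Suc k)
  show ?case
  proof (intro allI impI)
    fix g assume g: "symF g"
    obtain p where p: "symF p" "\<And>\<xi>. \<xi> > 0 \<Longrightarrow> nderiv k (V g) \<xi> = V p \<xi> / \<xi> ^ k"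
      using Suc g by blast
    define p' where "p' = (\<lambda>t. 1 * E p t + (- real k) * p t)"
    have sp': "symF p'" unfolding p'_def by (intro symF_lin symF_E p)
    have "nderiv (Suc k) (V g) \<xi> = V p' \<xi> / \<xi> ^ Suc k" if xi: "\<xi> > 0" for \<xi>
    proof -
      have "nderiv (Suc k) (V g) \<xi> = deriv (\<lambda>y. V p y / y ^ k) \<xi>"
        unfolding nderiv_Suc' by (rule deriv_cong_ev) (use p(2) xi eventually_nhds_in_open[of "{0<..}" \<xi>] in \<open>auto elim!: eventually_mono\<close>)
      also have "\<dots> = (V (E p) \<xi> / \<xi> * \<xi> ^ k - V p \<xi> * (real k * \<xi> ^ (k - 1))) / (\<xi> ^ k * \<xi> ^ k)"
        by (rule DERIV_imp_deriv) (use xi in \<open>auto intro!: derivative_eq_intros V_deriv[OF p(1)]\<close>)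
      also have "\<dots> = (V (E p) \<xi> - real k * V p \<xi>) / \<xi> ^ Suc k"
      proof -
        have h: "real k * \<xi> ^ (k - 1) = real k * \<xi> ^ k / \<xi>" using xi by (cases k) auto
        show ?thesis unfolding h using xi by (simp add: field_simps)
      qed
      also have "\<dots> = V p' \<xi> / \<xi> ^ Suc k"
        unfolding p'_def V_lin[OF symF_E[OF p(1)] p(1)] by simp
      finally show ?thesis .
    qed
    then show "\<exists>p. symF p \<and> (\<forall>\<xi>>0. nderiv (Suc k) (V g) \<xi> = V p \<xi> / \<xi> ^ Suc k)"
      using sp' by blast
  qed
qed

lemma V_differentiable:
  assumes g: "symF g" and xi: "\<xi> > 0"
  shows "nderiv k (V g) differentiable (at \<xi>)"
proof -
  obtain p where p: "symF p" "\<And>\<xi>. \<xi> > 0 \<Longrightarrow> nderiv k (V g) \<xi> = V p \<xi> / \<xi> ^ k"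
    using V_nderiv[of k] g by blast
  have "(\<lambda>y. V p y / y ^ k) differentiable (at \<xi>)"
    using DERIV_divide[OF V_deriv[OF p(1) xi] DERIV_pow[of k \<xi>]] xi
    by (auto simp: real_differentiable_def)
  then show ?thesis
    by (rule differentiable_local'[of _ _ "{0<..}"]) (use p(2) xi in auto)
qed

lemma Gs_bnd:
  assumes p: "symF p" obtains c where "\<And>\<xi>. \<bar>Gs p \<xi>\<bar> \<le> c"
proof -
  obtain c where c: "c \<ge> 0" "\<And>t. \<bar>p t\<bar> \<le> c * W t" using symF_bnd0[OF p] by blast
  have "\<bar>Gs p \<xi>\<bar> \<le> integral {0..} (\<lambda>t. c * W t)" for \<xi>
    unfolding Gs_def
  proof (rule int_abs_bound)
    show "(\<lambda>t. p t * sin (t * \<xi>)) integrable_on {0..}" by (rule symF_int_sin'[OF p])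
    show "(\<lambda>t. c * W t) integrable_on {0..}" by (rule W_int')
    fix t
    have "\<bar>p t * sin (t * \<xi>)\<bar> \<le> \<bar>p t\<bar>" by (simp add: abs_mult mult_left_le)
    then show "\<bar>p t * sin (t * \<xi>)\<bar> \<le> c * W t" using c(2)[of t] by linarith
  qed
  then show ?thesis using that by blast
qed

lemma Gs_decay:
  "\<forall>p. symF p \<longrightarrow> (\<exists>c. \<forall>\<xi>>0. \<bar>Gs p \<xi>\<bar> \<le> c / \<xi> ^ (2 * n))"
proof (induction n)
  case 0 then show ?case using Gs_bnd by (metis mult_0_right power_0 div_by_1)
next
  case (Suc n)
  show ?case
  proof (intro allI impI)
    fix p assume p: "symF p"
    obtain c where c: "\<And>\<xi>. \<xi> > 0 \<Longrightarrow> \<bar>Gs (deriv (deriv p)) \<xi>\<bar> \<le> c / \<xi> ^ (2 * n)"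
      using Suc symF_deriv[OF symF_deriv[OF p]] by blast
    have "\<bar>Gs p \<xi>\<bar> \<le> c / \<xi> ^ (2 * Suc n)" if xi: "\<xi> > 0" for \<xi>
    proof -
      have "Gs p \<xi> = - Gs (deriv (deriv p)) \<xi> / \<xi> ^ 2"
        using IBP_s[OF p, of \<xi>] IBP_c[OF symF_deriv[OF p], of \<xi>] xi by (simp add: power2_eq_square)
      then have "\<bar>Gs p \<xi>\<bar> = \<bar>Gs (deriv (deriv p)) \<xi>\<bar> / \<xi> ^ 2" using xi by (simp add: abs_divide)
      also have "\<dots> \<le> (c / \<xi> ^ (2 * n)) / \<xi> ^ 2" using c[OF xi] xi by (intro divide_right_mono) auto
      also have "\<dots> = c / \<xi> ^ (2 * Suc n)" by (simp add: power_add field_simps power2_eq_square)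
      finally show ?thesis .
    qed
    then show "\<exists>c. \<forall>\<xi>>0. \<bar>Gs p \<xi>\<bar> \<le> c / \<xi> ^ (2 * Suc n)" by blast
  qed
qed

lemma V_small:
  assumes p: "symF p"
  obtains c where "c \<ge> 0" "\<And>\<xi> B. \<xi> > 0 \<Longrightarrow> B integrable_on {0..} \<Longrightarrow> (\<And>t. t \<ge> 0 \<Longrightarrow> 0 \<le> B t) \<Longrightarrow>
      (\<And>t. t \<ge> T \<Longrightarrow> c * w t * min t (1 / \<xi>) \<le> B t) \<Longrightarrow> \<bar>V p \<xi>\<bar> \<le> integral {0..} B"
proof -
  obtain c where c: "c \<ge> 0" "\<And>t. t \<ge> T \<Longrightarrow> \<bar>nderiv 0 p t\<bar> \<le> c * w t / t ^ 0"
    using symF_bnd[OF p] by blast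
  show ?thesis
  proof (rule that[OF c(1)])
    fix \<xi> :: real and B assume xi: "\<xi> > 0" and Bi: "B integrable_on {0..}" and B0: "\<And>t. t \<ge> 0 \<Longrightarrow> 0 \<le> B t"
      and Bb: "\<And>t. t \<ge> T \<Longrightarrow> c * w t * min t (1 / \<xi>) \<le> B t"
    have "V p \<xi> = integral {0..} (\<lambda>t. p t * sin (t * \<xi>) / \<xi>)"
      unfolding V_def Gs_def integral_div_real ..
    also have "\<bar>\<dots>\<bar> \<le> integral {0..} B"
    proof (rule int_abs_bound)
      show "(\<lambda>t. p t * sin (t * \<xi>) / \<xi>) integrable_on {0..}"
        using integrable_cmul[OF symF_int_sin'[OF p], of "1/\<xi>" \<xi>] by simp
      show "B integrable_on {0..}" by (rule Bi)
      fix t :: real assume t: "t \<in> {0..}"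
      have s: "\<bar>sin (t * \<xi>)\<bar> / \<xi> \<le> min t (1 / \<xi>)"
      proof -
        have "\<bar>sin (t * \<xi>)\<bar> \<le> \<bar>t * \<xi>\<bar>" by (rule abs_sin_x_le_abs_x)
        moreover have "\<bar>sin (t * \<xi>)\<bar> \<le> 1" by simp
        ultimately show ?thesis using xi t by (auto simp: divide_le_eq abs_mult)
      qed
      show "\<bar>p t * sin (t * \<xi>) / \<xi>\<bar> \<le> B t"
      proof (cases "t \<ge> T")
        case True
        have "\<bar>p t * sin (t * \<xi>) / \<xi>\<bar> = \<bar>p t\<bar> * (\<bar>sin (t * \<xi>)\<bar> / \<xi>)" using xi by (simp add: abs_mult abs_divide)
        also have "\<dots> \<le> (c * w t) * min t (1 / \<xi>)"
          using c(2)[OF True] s xi by (intro mult_mono) auto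
        also have "\<dots> \<le> B t" using Bb[OF True] by simp
        finally show ?thesis .
      next
        case False
        then have "p t = 0" using p by (auto simp: symF_def)
        then show ?thesis using B0 t by simp
      qed
    qed
    finally show "\<bar>V p \<xi>\<bar> \<le> integral {0..} B" .
  qed
qed

end

lemma nderiv_1: "nderiv (Suc 0) f = deriv f" by (simp add: nderiv_Suc)

lemma cont_bound:
  fixes f :: "real \<Rightarrow> real"
  assumes "continuous_on {a..b} f"
  obtains B where "B \<ge> 0" "\<And>x. x \<in> {a..b} \<Longrightarrow> \<bar>f x\<bar> \<le> B"
proof -
  have "bounded (f ` {a..b})" by (rule compact_imp_bounded[OF compact_continuous_image[OF assms]]) simp
  then obtain B where B: "\<forall>x\<in>{a..b}. \<bar>f x\<bar> \<le> B" unfolding bounded_iff by auto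
  show ?thesis by (rule that[of "max B 0"]) (use B in force)+
qed

locale lamctx =
  fixes lam :: "real \<Rightarrow> real" and T Cl Cu :: real and D :: "nat \<Rightarrow> real"
  assumes T100: "T > 100" and lampos: "\<And>t. t > 50 \<Longrightarrow> lam t > 0" and lamsm: "smooth_on {50<..} lam"
    and Cl: "Cl \<ge> 0" and Cu: "0 \<le> Cu" "Cu < 1/2"
    and qlow: "\<And>t. t \<ge> T \<Longrightarrow> - Cl / t \<le> nderiv 1 lam t / lam t"
    and qup: "\<And>t. t \<ge> T \<Longrightarrow> nderiv 1 lam t / lam t \<le> Cu / t"
    and Dnn: "\<And>k. D k \<ge> 0"
    and Dbd: "\<And>k t. t \<ge> T \<Longrightarrow> \<bar>nderiv k lam t\<bar> \<le> D k * lam t / t ^ k"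
begin

abbreviation "S0 \<equiv> {50::real<..}"

lemma lnlam_deriv:
  assumes "x > 50"
  shows "((\<lambda>x. ln (lam x)) has_real_derivative nderiv 1 lam x / lam x) (at x)"
  using smooth_DERIV0[OF lamsm, of x] assms lampos[OF assms]
  by (auto intro!: derivative_eq_intros simp: nderiv_1 field_simps)

lemma growth:
  assumes "T \<le> s" "s \<le> t"
  shows "lam t \<le> lam s * (t / s) powr Cu"
proof -
  have "(\<lambda>x. ln (lam x) - Cu * ln x) t \<le> (\<lambda>x. ln (lam x) - Cu * ln x) s"
  proof (rule DERIV_nonpos_imp_nonincreasing[OF assms(2)])
    fix x assume x: "s \<le> x" "x \<le> t"
    then have x50: "x > 50" "x \<ge> T" using assms T100 by auto
    have "((\<lambda>x. ln (lam x) - Cu * ln x) has_real_derivative nderiv 1 lam x / lam x - Cu * (1 / x)) (at x)"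
      by (rule DERIV_diff[OF lnlam_deriv[OF x50(1)] DERIV_cmult[OF DERIV_ln_divide]]) (use x50 in auto)
    then show "\<exists>y. ((\<lambda>x. ln (lam x) - Cu * ln x) has_real_derivative y) (at x) \<and> y \<le> 0"
      using qup[OF x50(2)] by (intro exI conjI) auto
  qed
  then have "ln (lam t) \<le> ln (lam s) + Cu * (ln t - ln s)" by (simp add: algebra_simps)
  also have "\<dots> = ln (lam s * (t / s) powr Cu)"
    using assms T100 lampos[of s] by (simp add: ln_mult ln_div ln_powr)
  finally show ?thesis
    using assms T100 lampos[of s] lampos[of t] by (simp add: ln_le_cancel_iff)
qed

lemma growth_low:
  assumes "T \<le> s" "s \<le> t"
  shows "lam s * (t / s) powr (- Cl) \<le> lam t"
proof -
  have "(\<lambda>x. ln (lam x) + Cl * ln x) s \<le> (\<lambda>x. ln (lam x) + Cl * ln x) t"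
  proof (rule DERIV_nonneg_imp_nondecreasing[OF assms(2)])
    fix x assume x: "s \<le> x" "x \<le> t"
    then have x50: "x > 50" "x \<ge> T" using assms T100 by auto
    have "((\<lambda>x. ln (lam x) + Cl * ln x) has_real_derivative nderiv 1 lam x / lam x + Cl * (1 / x)) (at x)"
      by (rule DERIV_add[OF lnlam_deriv[OF x50(1)] DERIV_cmult[OF DERIV_ln_divide]]) (use x50 in auto)
    then show "\<exists>y. ((\<lambda>x. ln (lam x) + Cl * ln x) has_real_derivative y) (at x) \<and> y \<ge> 0"
      using qlow[OF x50(2)] by (intro exI conjI) auto
  qed
  then have "ln (lam s) + Cl * (ln s - ln t) \<le> ln (lam t)" by (simp add: algebra_simps)
  moreover have "ln (lam s) + Cl * (ln s - ln t) = ln (lam s * (t / s) powr (- Cl))"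
    using assms T100 lampos[of s] by (simp add: ln_mult ln_div ln_powr algebra_simps)
  ultimately show ?thesis
    using assms T100 lampos[of s] lampos[of t] by (simp add: ln_le_cancel_iff)
qed

lemma growth2:
  assumes "T \<le> t" "t \<le> s" "s \<le> 2 * t"
  shows "lam s \<le> 2 * lam t"
proof -
  have "lam s \<le> lam t * (s / t) powr Cu" by (rule growth) (use assms in auto)
  also have "(s / t) powr Cu \<le> 2 powr 1"
  proof -
    have "(s / t) powr Cu \<le> 2 powr Cu" using assms T100 Cu by (intro powr_mono2) (auto simp: field_simps)
    also have "\<dots> \<le> 2 powr 1" using Cu by (intro powr_mono) auto
    finally show ?thesis .
  qed
  finally show ?thesis using lampos[of t] assms T100 by (simp add: mult.commute mult_left_mono)
qed

lemma lnlam_bound: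
  obtains c where "c \<ge> 0" "\<And>t. t \<ge> T \<Longrightarrow> \<bar>ln (lam t)\<bar> \<le> c * ln t"
proof -
  define M where "M = max Cl Cu"
  have lnt: "ln t \<ge> 1" if "t \<ge> T" for t
  proof -
    have "exp 1 \<le> t" using exp_le T100 that by linarith
    then show ?thesis using T100 that by (simp add: ln_ge_iff)
  qed
  show ?thesis
  proof (rule that[of "\<bar>ln (lam T)\<bar> + M"])
    show "0 \<le> \<bar>ln (lam T)\<bar> + M" using Cu Cl by (simp add: M_def)
    fix t assume t: "t \<ge> T"
    have pos: "lam T > 0" "lam t > 0" using lampos T100 t by auto
    have d: "0 \<le> ln t - ln T" "ln t - ln T \<le> ln t" using t T100 by (auto simp: ln_le_cancel_iff)
    have up: "ln (lam t) \<le> ln (lam T) + Cu * (ln t - ln T)"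
    proof -
      have "ln (lam t) \<le> ln (lam T * (t / T) powr Cu)" using growth[OF order_refl t] pos by simp
      also have "\<dots> = ln (lam T) + Cu * (ln t - ln T)" using pos t T100 by (simp add: ln_mult ln_div ln_powr)
      finally show ?thesis .
    qed
    have lo: "ln (lam T) - Cl * (ln t - ln T) \<le> ln (lam t)"
    proof -
      have "lam T * (t / T) powr (- Cl) > 0" using pos t T100 by simp
      then have "ln (lam T * (t / T) powr (- Cl)) \<le> ln (lam t)" using growth_low[OF order_refl t] pos by simp
      moreover have "ln (lam T * (t / T) powr (- Cl)) = ln (lam T) - Cl * (ln t - ln T)"
        using pos t T100 by (simp add: ln_mult ln_div ln_powr)
      ultimately show ?thesis by simp
    qed
    have "Cu * (ln t - ln T) \<le> M * ln t" "Cl * (ln t - ln T) \<le> M * ln t"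
      using d Cu Cl by (auto simp: M_def intro!: mult_mono)
    then have "\<bar>ln (lam t)\<bar> \<le> \<bar>ln (lam T)\<bar> + M * ln t" using up lo by linarith
    also have "\<dots> \<le> (\<bar>ln (lam T)\<bar> + M) * ln t"
    proof -
      have "\<bar>ln (lam T)\<bar> * 1 \<le> \<bar>ln (lam T)\<bar> * ln t" using lnt[OF t] by (intro mult_left_mono) auto
      then show ?thesis by (simp add: distrib_right)
    qed
    finally show "\<bar>ln (lam t)\<bar> \<le> (\<bar>ln (lam T)\<bar> + M) * ln t" .
  qed
qed

lemma T_facts: "t \<ge> T \<Longrightarrow> t > 0 \<and> t > 50 \<and> t \<in> S0"
  using T100 by auto

lemma ln_ge1: "t \<ge> T \<Longrightarrow> ln t \<ge> 1"
proof -
  assume t: "t \<ge> T"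
  have "exp 1 \<le> t" using exp_le T100 t by linarith
  then show ?thesis using T100 t by (simp add: ln_ge_iff)
qed

definition sym :: "(real \<Rightarrow> real) \<Rightarrow> (real \<Rightarrow> real) \<Rightarrow> bool" where
  "sym u f \<longleftrightarrow> smooth_on S0 f \<and> (\<forall>j. \<exists>c. \<forall>t\<ge>T. \<bar>nderiv j f t\<bar> \<le> c * u t / t ^ j)"

definition wnn :: "(real \<Rightarrow> real) \<Rightarrow> bool" where "wnn u \<longleftrightarrow> (\<forall>t\<ge>T. u t \<ge> 0)"

lemma sym_smooth: "sym u f \<Longrightarrow> smooth_on S0 f" by (simp add: sym_def)

lemma sym_bnd:
  assumes "sym u f" "wnn u"
  obtains c where "c \<ge> 0" "\<And>t. t \<ge> T \<Longrightarrow> \<bar>nderiv j f t\<bar> \<le> c * u t / t ^ j"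
proof -
  obtain c where c: "\<And>t. t \<ge> T \<Longrightarrow> \<bar>nderiv j f t\<bar> \<le> c * u t / t ^ j" using assms unfolding sym_def by blast
  show ?thesis
  proof (rule that[of "max c 0"])
    fix t assume t: "t \<ge> T"
    have "c * u t / t ^ j \<le> max c 0 * u t / t ^ j"
      using assms(2) T_facts[OF t] t unfolding wnn_def by (intro divide_right_mono mult_right_mono) auto
    then show "\<bar>nderiv j f t\<bar> \<le> max c 0 * u t / t ^ j" using c[OF t] by linarith
  qed simp
qed

lemma sym_bnds:
  assumes "sym u f" "wnn u"
  obtains cf where "\<And>i. cf i \<ge> 0" "\<And>i t. t \<ge> T \<Longrightarrow> \<bar>nderiv i f t\<bar> \<le> cf i * u t / t ^ i"
proof -
  have "\<forall>i. \<exists>c. c \<ge> 0 \<and> (\<forall>t\<ge>T. \<bar>nderiv i f t\<bar> \<le> c * u t / t ^ i)"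
  proof
    fix i obtain c where "c \<ge> 0" "\<And>t. t \<ge> T \<Longrightarrow> \<bar>nderiv i f t\<bar> \<le> c * u t / t ^ i"
      using sym_bnd[OF assms] by blast
    then show "\<exists>c. c \<ge> 0 \<and> (\<forall>t\<ge>T. \<bar>nderiv i f t\<bar> \<le> c * u t / t ^ i)" by blast
  qed
  then obtain cf where "\<forall>i. cf i \<ge> 0 \<and> (\<forall>t\<ge>T. \<bar>nderiv i f t\<bar> \<le> cf i * u t / t ^ i)"
    by (metis choice)
  then show ?thesis using that by blast
qed

lemma sym_lin:
  assumes "sym u f" "sym u g" "wnn u"
  shows "sym u (\<lambda>t. a * f t + b * g t)"
  unfolding sym_def
proof (intro conjI allI)
  show "smooth_on S0 (\<lambda>t. a * f t + b * g t)" using assms smooth_lin[of S0 f g a b] by (simp add: sym_def)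
  fix j
  obtain c where c: "c \<ge> 0" "\<And>t. t \<ge> T \<Longrightarrow> \<bar>nderiv j f t\<bar> \<le> c * u t / t ^ j"
    using sym_bnd[OF assms(1,3)] by blast
  obtain d where d: "d \<ge> 0" "\<And>t. t \<ge> T \<Longrightarrow> \<bar>nderiv j g t\<bar> \<le> d * u t / t ^ j"
    using sym_bnd[OF assms(2,3)] by blast
  show "\<exists>c. \<forall>t\<ge>T. \<bar>nderiv j (\<lambda>t. a * f t + b * g t) t\<bar> \<le> c * u t / t ^ j"
  proof (intro exI[of _ "\<bar>a\<bar> * c + \<bar>b\<bar> * d"] allI impI)
    fix t assume t: "T \<le> t"
    have e: "nderiv j (\<lambda>t. a * f t + b * g t) t = a * nderiv j f t + b * nderiv j g t"
      using assms nderiv_lin[of S0 f g t j a b] T_facts[OF t] by (auto simp: sym_def)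
    have "\<bar>a * nderiv j f t + b * nderiv j g t\<bar> \<le> \<bar>a\<bar> * \<bar>nderiv j f t\<bar> + \<bar>b\<bar> * \<bar>nderiv j g t\<bar>"
      by (simp add: abs_mult[symmetric] abs_triangle_ineq)
    also have "\<dots> \<le> \<bar>a\<bar> * (c * u t / t ^ j) + \<bar>b\<bar> * (d * u t / t ^ j)"
      using c(2)[OF t] d(2)[OF t] by (intro add_mono mult_left_mono) auto
    finally show "\<bar>nderiv j (\<lambda>t. a * f t + b * g t) t\<bar> \<le> (\<bar>a\<bar> * c + \<bar>b\<bar> * d) * u t / t ^ j"
      unfolding e by (simp add: add_divide_distrib algebra_simps)
  qed
qed

lemma sym_mono:
  assumes "sym u f" "wnn u" "\<And>t. t \<ge> T \<Longrightarrow> u t \<le> K * v t"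
  shows "sym v f"
  unfolding sym_def
proof (intro conjI allI)
  show "smooth_on S0 f" using assms by (simp add: sym_def)
  fix j
  obtain c where c: "c \<ge> 0" "\<And>t. t \<ge> T \<Longrightarrow> \<bar>nderiv j f t\<bar> \<le> c * u t / t ^ j"
    using sym_bnd[OF assms(1,2)] by blast
  show "\<exists>c. \<forall>t\<ge>T. \<bar>nderiv j f t\<bar> \<le> c * v t / t ^ j"
  proof (intro exI[of _ "c * K"] allI impI)
    fix t assume t: "T \<le> t"
    have "c * u t / t ^ j \<le> c * (K * v t) / t ^ j"
      using assms(3)[OF t] c(1) T_facts[OF t] by (intro divide_right_mono mult_left_mono) auto
    then show "\<bar>nderiv j f t\<bar> \<le> c * K * v t / t ^ j" using c(2)[OF t] by (simp add: mult.assoc)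
  qed
qed

lemma sym_deriv:
  assumes "sym u f" shows "sym (\<lambda>t. u t / t) (deriv f)"
  unfolding sym_def
proof (intro conjI allI)
  show "smooth_on S0 (deriv f)" using assms by (auto simp: sym_def intro: smooth_deriv)
  fix j
  obtain c where c: "\<And>t. t \<ge> T \<Longrightarrow> \<bar>nderiv (Suc j) f t\<bar> \<le> c * u t / t ^ (Suc j)"
    using assms unfolding sym_def by blast
  show "\<exists>c. \<forall>t\<ge>T. \<bar>nderiv j (deriv f) t\<bar> \<le> c * (u t / t) / t ^ j"
    using c by (intro exI[of _ c]) (auto simp: nderiv_Suc field_simps)
qed

lemma sym_from_deriv:
  assumes "\<And>x. x \<in> S0 \<Longrightarrow> (f has_real_derivative g x) (at x)" "sym (\<lambda>t. u t / t) g"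
    "\<And>t. t \<ge> T \<Longrightarrow> \<bar>f t\<bar> \<le> c * u t"
  shows "sym u f"
  unfolding sym_def
proof (intro conjI allI)
  have sg: "smooth_on S0 g" using assms(2) by (simp add: sym_def)
  show "smooth_on S0 f" by (rule smooth_from_deriv(1)[OF _ assms(1) sg]) auto
  fix j
  show "\<exists>c. \<forall>t\<ge>T. \<bar>nderiv j f t\<bar> \<le> c * u t / t ^ j"
  proof (cases j)
    case 0 then show ?thesis using assms(3) by auto
  next
    case (Suc k)
    obtain c where c: "\<And>t. t \<ge> T \<Longrightarrow> \<bar>nderiv k g t\<bar> \<le> c * (u t / t) / t ^ k"
      using assms(2) unfolding sym_def by blast
    show ?thesis
    proof (intro exI[of _ c] allI impI)
      fix t assume t: "T \<le> t"
      have "nderiv (Suc k) f t = nderiv k g t"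
        by (rule smooth_from_deriv(2)[OF _ assms(1) sg]) (use T_facts[OF t] in auto)
      then show "\<bar>nderiv j f t\<bar> \<le> c * u t / t ^ j" using c[OF t] Suc by (simp add: field_simps)
    qed
  qed
qed

lemma sym_mult:
  assumes "sym u f" "sym v g" "wnn u" "wnn v"
  shows "sym (\<lambda>t. u t * v t) (\<lambda>t. f t * g t)"
  unfolding sym_def
proof (intro conjI allI)
  have sf: "smooth_on S0 f" and sg: "smooth_on S0 g" using assms by (auto simp: sym_def)
  show "smooth_on S0 (\<lambda>t. f t * g t)" by (rule smooth_mult[OF _ sf sg]) auto
  obtain cf where cf: "\<And>i. cf i \<ge> 0" "\<And>i t. t \<ge> T \<Longrightarrow> \<bar>nderiv i f t\<bar> \<le> cf i * u t / t ^ i"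
    using sym_bnds[OF assms(1,3)] by blast
  obtain cg where cg: "\<And>i. cg i \<ge> 0" "\<And>i t. t \<ge> T \<Longrightarrow> \<bar>nderiv i g t\<bar> \<le> cg i * v t / t ^ i"
    using sym_bnds[OF assms(2,4)] by blast
  fix j
  show "\<exists>c. \<forall>t\<ge>T. \<bar>nderiv j (\<lambda>t. f t * g t) t\<bar> \<le> c * (u t * v t) / t ^ j"
  proof (intro exI[of _ "\<Sum>i = 0..j. real (j choose i) * cf i * cg (j - i)"] allI impI)
    fix t assume t: "T \<le> t"
    have tp: "t > 0" using T_facts[OF t] by simp
    have u0: "u t \<ge> 0" and v0: "v t \<ge> 0" using assms(3,4) t by (auto simp: wnn_def)
    have "nderiv j (\<lambda>t. f t * g t) t = (\<Sum>i = 0..j. real (j choose i) * nderiv i f t * nderiv (j-i) g t)"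
      by (rule leibniz[OF _ sf sg]) (use T_facts[OF t] in auto)
    also have "\<bar>\<dots>\<bar> \<le> (\<Sum>i = 0..j. \<bar>real (j choose i) * nderiv i f t * nderiv (j-i) g t\<bar>)"
      by (rule sum_abs)
    also have "\<dots> \<le> (\<Sum>i = 0..j. real (j choose i) * cf i * cg (j - i) * (u t * v t) / t ^ j)"
    proof (rule sum_mono)
      fix i assume i: "i \<in> {0..j}"
      have "\<bar>real (j choose i) * nderiv i f t * nderiv (j-i) g t\<bar>
          = real (j choose i) * (\<bar>nderiv i f t\<bar> * \<bar>nderiv (j-i) g t\<bar>)" by (simp add: abs_mult)
      also have "\<dots> \<le> real (j choose i) * ((cf i * u t / t ^ i) * (cg (j - i) * v t / t ^ (j - i)))"
        using cf(2)[OF t, of i] cg(2)[OF t, of "j - i"]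
        by (intro mult_left_mono mult_mono) auto
      also have "\<dots> = real (j choose i) * cf i * cg (j - i) * (u t * v t) / (t ^ i * t ^ (j - i))"
        by (simp add: field_simps)
      also have "t ^ i * t ^ (j - i) = t ^ j" using i by (simp add: power_add[symmetric])
      finally show "\<bar>real (j choose i) * nderiv i f t * nderiv (j-i) g t\<bar> \<le>
          real (j choose i) * cf i * cg (j - i) * (u t * v t) / t ^ j" .
    qed
    also have "\<dots> = (\<Sum>i = 0..j. real (j choose i) * cf i * cg (j - i)) * (u t * v t) / t ^ j"
      by (simp add: sum_distrib_right sum_divide_distrib)
    finally show "\<bar>nderiv j (\<lambda>t. f t * g t) t\<bar> \<le> (\<Sum>i = 0..j. real (j choose i) * cf i * cg (j - i)) * (u t * v t) / t ^ j" .
  qed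
qed

lemma wnn_lam: "wnn (\<lambda>t. lam t / t ^ m)"
  unfolding wnn_def using lampos T_facts by (auto intro!: divide_nonneg_pos less_imp_le)

lemma wnn_powr: "wnn (\<lambda>t. t powr a)" unfolding wnn_def by simp
lemma wnn_ln: "wnn (\<lambda>t. ln t)" unfolding wnn_def using ln_ge1 by force
lemma wnn_inv: "wnn (\<lambda>t. 1 / t)" unfolding wnn_def using T_facts by force
lemma wnn_const: "c \<ge> 0 \<Longrightarrow> wnn (\<lambda>t. c)" unfolding wnn_def by simp
lemma wnn_mult: "wnn u \<Longrightarrow> wnn v \<Longrightarrow> wnn (\<lambda>t. u t * v t)" unfolding wnn_def by simp

lemma sym_L: "sym (\<lambda>t. lam t / t ^ m) (nderiv m lam)"
  unfolding sym_def
proof (intro conjI allI)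
  show "smooth_on S0 (nderiv m lam)" by (rule smooth_nderiv[OF lamsm])
  fix j
  show "\<exists>c. \<forall>t\<ge>T. \<bar>nderiv j (nderiv m lam) t\<bar> \<le> c * (lam t / t ^ m) / t ^ j"
  proof (intro exI[of _ "D (j + m)"] allI impI)
    fix t assume t: "T \<le> t"
    have "\<bar>nderiv (j + m) lam t\<bar> \<le> D (j + m) * lam t / t ^ (j + m)" by (rule Dbd[OF t])
    then show "\<bar>nderiv j (nderiv m lam) t\<bar> \<le> D (j + m) * (lam t / t ^ m) / t ^ j"
      by (simp add: nderiv_plus power_add field_simps)
  qed
qed

lemma sym_powr: "sym (\<lambda>t. t powr a) (\<lambda>t. t powr a)"
  unfolding sym_def
proof (intro conjI allI)
  show "smooth_on S0 (\<lambda>t. t powr a)" by (rule smooth_subset[OF smooth_powr]) auto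
  fix j
  show "\<exists>c. \<forall>t\<ge>T. \<bar>nderiv j (\<lambda>t. t powr a) t\<bar> \<le> c * t powr a / t ^ j"
  proof (intro exI[of _ "\<bar>\<Prod>i<j. (a - real i)\<bar>"] allI impI)
    fix t assume t: "T \<le> t"
    have tp: "t > 0" using T_facts[OF t] by simp
    have "nderiv j (\<lambda>t. t powr a) t = (\<Prod>i<j. (a - real i)) * (t powr a / t ^ j)"
      using nderiv_powr[OF tp] tp by (simp add: powr_diff powr_realpow)
    then show "\<bar>nderiv j (\<lambda>t. t powr a) t\<bar> \<le> \<bar>\<Prod>i<j. (a - real i)\<bar> * t powr a / t ^ j"
      using tp by (simp add: abs_mult)
  qed
qed

lemma sym_const: "sym (\<lambda>t. 1) (\<lambda>t. c)"
  unfolding sym_def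
proof (intro conjI allI)
  show "smooth_on S0 (\<lambda>t. c)" by (rule smooth_const)
  fix j show "\<exists>ca. \<forall>t\<ge>T. \<bar>nderiv j (\<lambda>t. c) t\<bar> \<le> ca * 1 / t ^ j"
    by (intro exI[of _ "\<bar>c\<bar>"]) (auto simp: nderiv_const dest!: T_facts)
qed

lemma sym_ln: "sym (\<lambda>t. ln t) (\<lambda>t. ln t)"
proof (rule sym_from_deriv[where g = "\<lambda>t. t powr (-1)" and c = 1])
  fix x :: real assume x: "x \<in> S0"
  then show "((\<lambda>t. ln t) has_real_derivative x powr (-1)) (at x)"
    by (auto intro!: derivative_eq_intros simp: powr_minus_divide)
next
  show "sym (\<lambda>t. ln t / t) (\<lambda>t. t powr - 1)"
  proof (rule sym_mono[OF sym_powr wnn_powr, where K=1])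
    fix t assume t: "t \<ge> T"
    then show "t powr - 1 \<le> 1 * (ln t / t)" using ln_ge1[OF t] T_facts[OF t]
      by (simp add: powr_minus_divide divide_right_mono)
  qed
next
  fix t assume "t \<ge> T" then show "\<bar>ln t\<bar> \<le> 1 * ln t" using ln_ge1 by force
qed

definition q where "q t = nderiv 1 lam t / lam t" for t

lemma q_smooth: "smooth_on S0 q"
proof -
  have "smooth_on S0 (\<lambda>t. 1 / lam t)"
    by (rule smooth_compose[OF _ _ lamsm _ smooth_inverse]) (use lampos in auto)
  then have "smooth_on S0 (\<lambda>t. nderiv 1 lam t * (1 / lam t))"
    by (intro smooth_mult smooth_nderiv[OF lamsm]) auto
  then show ?thesis unfolding q_def by simp
qed

lemma q_bound: "\<exists>c. \<forall>t\<ge>T. \<bar>nderiv j q t\<bar> \<le> c / t ^ Suc j"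
proof (induction j rule: less_induct)
  case (less j)
  have "\<forall>i. \<exists>c. i < j \<longrightarrow> (\<forall>t\<ge>T. \<bar>nderiv i q t\<bar> \<le> c / t ^ Suc i)" using less by blast
  then obtain cq where cq: "\<And>i t. i < j \<Longrightarrow> t \<ge> T \<Longrightarrow> \<bar>nderiv i q t\<bar> \<le> cq i / t ^ Suc i"
    by (metis choice)
  define K where "K = D (Suc j) + (\<Sum>i<j. real (j choose i) * cq i * D (j - i))"
  show ?case
  proof (intro exI[of _ K] allI impI)
    fix t assume t: "T \<le> t"
    have tp: "t > 0" and t50: "t \<in> S0" using T_facts[OF t] by auto
    have lp: "lam t > 0" using lampos T_facts[OF t] by auto
    have "nderiv j (\<lambda>t. q t * lam t) t = nderiv j (nderiv 1 lam) t"
    proof (rule nderiv_local[of S0])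
      fix x assume "x \<in> S0" then have "lam x > 0" using lampos by auto
      then show "q x * lam x = nderiv 1 lam x" by (simp add: q_def)
    qed (use t50 in auto)
    also have "\<dots> = nderiv (Suc j) lam t" by (simp add: nderiv_plus[symmetric])
    finally have e1: "nderiv j (\<lambda>t. q t * lam t) t = nderiv (Suc j) lam t" .
    have "nderiv j (\<lambda>t. q t * lam t) t = (\<Sum>i = 0..j. real (j choose i) * nderiv i q t * nderiv (j - i) lam t)"
      by (rule leibniz[OF _ q_smooth lamsm t50]) auto
    also have "\<dots> = (\<Sum>i<j. real (j choose i) * nderiv i q t * nderiv (j - i) lam t) + nderiv j q t * lam t"
      by (simp add: atLeast0AtMost lessThan_Suc_atMost[symmetric])
    finally have e2: "nderiv j q t * lam t = nderiv (Suc j) lam t - (\<Sum>i<j. real (j choose i) * nderiv i q t * nderiv (j - i) lam t)"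
      using e1 by simp
    have b1: "\<bar>nderiv (Suc j) lam t\<bar> \<le> D (Suc j) * lam t / t ^ Suc j" by (rule Dbd[OF t])
    have b2: "\<bar>\<Sum>i<j. real (j choose i) * nderiv i q t * nderiv (j - i) lam t\<bar> \<le>
        (\<Sum>i<j. real (j choose i) * cq i * D (j - i)) * lam t / t ^ Suc j"
    proof -
      have "\<bar>\<Sum>i<j. real (j choose i) * nderiv i q t * nderiv (j - i) lam t\<bar> \<le>
          (\<Sum>i<j. \<bar>real (j choose i) * nderiv i q t * nderiv (j - i) lam t\<bar>)" by (rule sum_abs)
      also have "\<dots> \<le> (\<Sum>i<j. real (j choose i) * cq i * D (j - i) * lam t / t ^ Suc j)"
      proof (rule sum_mono)
        fix i assume i: "i \<in> {..<j}"
        have "\<bar>real (j choose i) * nderiv i q t * nderiv (j - i) lam t\<bar> =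
            real (j choose i) * (\<bar>nderiv i q t\<bar> * \<bar>nderiv (j - i) lam t\<bar>)" by (simp add: abs_mult)
        also have "\<dots> \<le> real (j choose i) * ((cq i / t ^ Suc i) * (D (j - i) * lam t / t ^ (j - i)))"
        proof (intro mult_left_mono mult_mono)
          show "\<bar>nderiv i q t\<bar> \<le> cq i / t ^ Suc i" using cq[of i t] i t by auto
          show "\<bar>nderiv (j - i) lam t\<bar> \<le> D (j - i) * lam t / t ^ (j - i)" by (rule Dbd[OF t])
          show "0 \<le> cq i / t ^ Suc i" using cq[of i t] i t by (meson abs_ge_zero lessThan_iff order_trans)
        qed auto
        also have "\<dots> = real (j choose i) * cq i * D (j - i) * lam t / (t ^ Suc i * t ^ (j - i))"
          by (simp add: field_simps)
        also have "t ^ Suc i * t ^ (j - i) = t ^ Suc j" using i by (simp add: power_add[symmetric])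
        finally show "\<bar>real (j choose i) * nderiv i q t * nderiv (j - i) lam t\<bar> \<le>
            real (j choose i) * cq i * D (j - i) * lam t / t ^ Suc j" .
      qed
      also have "\<dots> = (\<Sum>i<j. real (j choose i) * cq i * D (j - i)) * lam t / t ^ Suc j"
        by (simp add: sum_distrib_right sum_divide_distrib)
      finally show ?thesis .
    qed
    have "\<bar>nderiv j q t\<bar> * lam t = \<bar>nderiv j q t * lam t\<bar>" using lp by (simp add: abs_mult)
    also have "\<dots> \<le> \<bar>nderiv (Suc j) lam t\<bar> + \<bar>\<Sum>i<j. real (j choose i) * nderiv i q t * nderiv (j - i) lam t\<bar>"
      unfolding e2 by (rule abs_triangle_ineq4)
    also have "\<dots> \<le> D (Suc j) * lam t / t ^ Suc j + (\<Sum>i<j. real (j choose i) * cq i * D (j - i)) * lam t / t ^ Suc j"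
      using b1 b2 by (rule add_mono)
    also have "\<dots> = K * lam t / t ^ Suc j" unfolding K_def by (simp add: add_divide_distrib distrib_right)
    finally have "\<bar>nderiv j q t\<bar> * lam t \<le> K * lam t / t ^ Suc j" .
    also have "K * lam t / t ^ Suc j = (K / t ^ Suc j) * lam t" by simp
    finally show "\<bar>nderiv j q t\<bar> \<le> K / t ^ Suc j" using lp by (simp only: mult_le_cancel_right_pos)
  qed
qed

lemma sym_q: "sym (\<lambda>t. 1 / t) q"
  unfolding sym_def
proof (intro conjI allI)
  show "smooth_on S0 q" by (rule q_smooth)
  fix j obtain c where "\<forall>t\<ge>T. \<bar>nderiv j q t\<bar> \<le> c / t ^ Suc j" using q_bound by blast
  then show "\<exists>c. \<forall>t\<ge>T. \<bar>nderiv j q t\<bar> \<le> c * (1 / t) / t ^ j" by (intro exI[of _ c]) (simp add: field_simps)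
qed

lemma sym_lnlam: "sym (\<lambda>t. ln t) (\<lambda>t. ln (lam t))"
proof -
  obtain c where c: "c \<ge> 0" "\<And>t. t \<ge> T \<Longrightarrow> \<bar>ln (lam t)\<bar> \<le> c * ln t" using lnlam_bound by blast
  show ?thesis
  proof (rule sym_from_deriv[where g = q and c = c])
    fix x :: real assume x: "x \<in> S0"
    then show "((\<lambda>t. ln (lam t)) has_real_derivative q x) (at x)" using lnlam_deriv by (simp add: q_def)
  next
    show "sym (\<lambda>t. ln t / t) q"
    proof (rule sym_mono[OF sym_q wnn_inv, where K=1])
      fix t assume t: "t \<ge> T"
      then show "1 / t \<le> 1 * (ln t / t)" using ln_ge1[OF t] T_facts[OF t] by (simp add: divide_right_mono)
    qed
  qed (rule c(2))
qed

end

lemma quot_bound: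
  fixes \<phi> \<phi>' :: "real \<Rightarrow> real"
  assumes "\<And>u. u \<in> {1..2} \<Longrightarrow> (\<phi> has_real_derivative \<phi>' u) (at u)" "\<And>u. u \<in> {1..2} \<Longrightarrow> \<bar>\<phi>' u\<bar> \<le> B" "u \<in> {1..2}"
  shows "\<bar>(\<phi> u - \<phi> 1) / (u - 1)\<bar> \<le> B"
proof (cases "u = 1")
  case True then show ?thesis using assms(2)[of 1] by auto
next
  case False
  have "\<bar>\<phi> u - \<phi> 1\<bar> \<le> B * \<bar>u - 1\<bar>"
    by (rule lip_bound[of "{1..2}" \<phi> \<phi>']) (use assms in auto)
  then show ?thesis using False by (simp add: abs_divide divide_le_eq)
qed

context lamctx begin

definition Jj :: "nat \<Rightarrow> (real \<Rightarrow> real) \<Rightarrow> real \<Rightarrow> real" where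
  "Jj j g t = integral {1..2} (\<lambda>u. (u ^ j * g (t * u) - g t) / (u - 1))"

lemma J_facts:
  assumes sg: "smooth_on S0 g" and x: "x > 50"
    and A: "\<And>s. s \<in> {x..2*x} \<Longrightarrow> \<bar>g s\<bar> \<le> A0 \<and> \<bar>deriv g s\<bar> \<le> A1"
  shows "(\<lambda>u. (u ^ j * g (x * u) - g x) / (u - 1)) integrable_on {1..2}"
    "\<And>u. u \<in> {1..2} \<Longrightarrow> \<bar>(u ^ j * g (x * u) - g x) / (u - 1)\<bar> \<le> real j * 2 ^ j * A0 + 2 ^ j * x * A1"
proof -
  define \<phi> where "\<phi> u = u ^ j * g (x * u)" for u
  define \<phi>' where "\<phi>' u = real j * u ^ (j - 1) * g (x * u) + u ^ j * (deriv g (x * u) * x)" for u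
  have xu: "x * u \<in> {x..2*x}" "x * u \<in> S0" if "u \<in> {1..2}" for u
  proof -
    have h: "x * 1 \<le> x * u" "x * u \<le> x * 2" using that x by (intro mult_left_mono; auto)+
    then have "50 < x * u" using x by linarith
    then show "x * u \<in> {x..2*x}" "x * u \<in> S0" using h by (simp_all add: mult.commute)
  qed
  have d: "(\<phi> has_real_derivative \<phi>' u) (at u)" if u: "u \<in> {1..2}" for u
  proof -
    have "((\<lambda>u. g (x * u)) has_real_derivative deriv g (x * u) * (x * 1)) (at u)"
      by (rule DERIV_chain2[OF smooth_DERIV0[OF sg xu(2)[OF u]] DERIV_cmult[OF DERIV_ident]])
    from DERIV_mult'[OF DERIV_pow this, of j] show ?thesis unfolding \<phi>_def
      by (rule DERIV_cong) (simp add: \<phi>'_def algebra_simps)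
  qed
  have A0: "A0 \<ge> 0" using A[of x] x by auto
  have A1: "A1 \<ge> 0" using A[of x] x by auto
  have b: "\<bar>\<phi>' u\<bar> \<le> real j * 2 ^ j * A0 + 2 ^ j * x * A1" if u: "u \<in> {1..2}" for u
  proof -
    have p1: "u ^ (j - 1) \<le> 2 ^ j"
    proof -
      have "u ^ (j - 1) \<le> 2 ^ (j - 1)" using u by (intro power_mono) auto
      also have "(2::real) ^ (j - 1) \<le> 2 ^ j" by (intro power_increasing) auto
      finally show ?thesis .
    qed
    have p2: "u ^ j \<le> 2 ^ j" using u by (intro power_mono) auto
    have "\<bar>\<phi>' u\<bar> \<le> real j * u ^ (j - 1) * \<bar>g (x * u)\<bar> + u ^ j * (\<bar>deriv g (x * u)\<bar> * x)"
      unfolding \<phi>'_def using u x by (auto simp: abs_mult intro!: order_trans[OF abs_triangle_ineq])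
    also have "\<dots> \<le> real j * 2 ^ j * A0 + 2 ^ j * (A1 * x)"
      using A[OF xu(1)[OF u]] p1 p2 u x A0 A1
      by (intro add_mono mult_mono mult_left_mono) auto
    finally show ?thesis by (simp add: algebra_simps)
  qed
  have eq: "(u ^ j * g (x * u) - g x) / (u - 1) = (\<phi> u - \<phi> 1) / (u - 1)" for u by (simp add: \<phi>_def)
  show bnd: "\<And>u. u \<in> {1..2} \<Longrightarrow> \<bar>(u ^ j * g (x * u) - g x) / (u - 1)\<bar> \<le> real j * 2 ^ j * A0 + 2 ^ j * x * A1"
    unfolding eq by (rule quot_bound[OF d b]) auto
  show "(\<lambda>u. (u ^ j * g (x * u) - g x) / (u - 1)) integrable_on {1..2}"
  proof (rule measurable_bounded_by_integrable_imp_integrable_real[where g="\<lambda>_. real j * 2 ^ j * A0 + 2 ^ j * x * A1"])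
    have c1: "continuous_on {1..2} (\<lambda>u. u ^ j * g (x * u) - g x)"
    proof -
      have "continuous_on {1..2} (\<lambda>u. g (x * u))"
        by (rule continuous_on_compose2[OF smooth_cont_on[OF sg, of S0 0, simplified]]) (use xu in \<open>auto intro!: continuous_intros\<close>)
      then show ?thesis by (auto intro!: continuous_intros)
    qed
    show "(\<lambda>u. (u ^ j * g (x * u) - g x) / (u - 1)) \<in> borel_measurable (lebesgue_on {1..2})"
      by (intro borel_measurable_divide continuous_imp_measurable_on_sets_lebesgue c1 continuous_intros) auto
  qed (use bnd in auto)
qed

lemma J_deriv:
  assumes sg: "smooth_on S0 g" and t: "t > 50"
  shows "(Jj j g has_real_derivative Jj (Suc j) (deriv g) t) (at t)"
proof -
  define \<delta> where "\<delta> = (t - 50) / 2"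
  define a where "a = t - \<delta>"
  define b where "b = t + \<delta>"
  have ab: "a > 50" "a \<le> b" "\<delta> > 0" unfolding a_def b_def \<delta>_def using t by (simp_all add: field_simps)
  have sg': "smooth_on S0 (deriv g)" by (rule smooth_deriv[OF sg])
  have sub: "{a..2*b} \<subseteq> S0" using ab by auto
  obtain A0 where A0: "A0 \<ge> 0" "\<And>s. s \<in> {a..2*b} \<Longrightarrow> \<bar>nderiv 0 (deriv g) s\<bar> \<le> A0"
    using cont_bound[OF smooth_cont_on[OF sg' sub, of 0]] by blast
  obtain A1 where A1: "A1 \<ge> 0" "\<And>s. s \<in> {a..2*b} \<Longrightarrow> \<bar>nderiv 1 (deriv g) s\<bar> \<le> A1"
    using cont_bound[OF smooth_cont_on[OF sg' sub, of 1]] by blast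
  have Ux: "x > 50" "x \<le> b" "{x..2*x} \<subseteq> {a..2*b}" if "x \<in> ball t \<delta>" for x
    using that ab by (auto simp: a_def b_def dist_real_def)
  show ?thesis unfolding Jj_def
  proof (rule DUI(2)[where U = "ball t \<delta>" and h = "\<lambda>_. real (Suc j) * 2 ^ (Suc j) * A0 + 2 ^ (Suc j) * b * A1"])
    show "t \<in> ball t \<delta>" using ab by simp
    show "(\<lambda>_. real (Suc j) * 2 ^ Suc j * A0 + 2 ^ Suc j * b * A1) integrable_on {1..2::real}" by (rule integrable_const_ivl)
  next
    fix x u assume x: "x \<in> ball t \<delta>" and u: "u \<in> {1..2::real}"
    have x50: "x > 50" using Ux[OF x] by simp
    show "((\<lambda>x. (u ^ j * g (x * u) - g x) / (u - 1)) has_real_derivative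
        (u ^ Suc j * deriv g (x * u) - deriv g x) / (u - 1)) (at x)"
    proof (cases "u = 1")
      case True then show ?thesis by simp
    next
      case False
      have "x * 1 \<le> x * u" using x50 u by (intro mult_left_mono) auto
      then have "50 < x * u" using x50 by linarith
      then have xu: "x * u \<in> S0" by simp
      have h1: "((\<lambda>x. x * u) has_real_derivative u) (at x)" by (auto intro!: derivative_eq_intros)
      have h2: "((\<lambda>x. g (x * u)) has_real_derivative deriv g (x * u) * u) (at x)"
        by (rule DERIV_chain2[OF smooth_DERIV0[OF sg xu] h1])
      have "((\<lambda>x. (u ^ j * g (x * u) - g x) / (u - 1)) has_real_derivative
          (u ^ j * (deriv g (x * u) * u) - deriv g x) / (u - 1)) (at x)"
        by (intro DERIV_cdivide DERIV_diff DERIV_cmult h2 smooth_DERIV0[OF sg]) (use x50 in auto)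
      then show ?thesis by (rule DERIV_cong) (simp add: algebra_simps)
    qed
    have "\<bar>(u ^ Suc j * deriv g (x * u) - deriv g x) / (u - 1)\<bar> \<le> real (Suc j) * 2 ^ Suc j * A0 + 2 ^ Suc j * x * A1"
      by (rule J_facts(2)[OF sg' x50 _ u]) (use A0 A1 Ux(3)[OF x] in \<open>auto simp: nderiv_1\<close>)
    also have "\<dots> \<le> real (Suc j) * 2 ^ Suc j * A0 + 2 ^ Suc j * b * A1"
      using Ux(2)[OF x] A1(1) by (intro add_left_mono mult_right_mono mult_left_mono) auto
    finally show "\<bar>(u ^ Suc j * deriv g (x * u) - deriv g x) / (u - 1)\<bar> \<le> real (Suc j) * 2 ^ Suc j * A0 + 2 ^ Suc j * b * A1" .
  next
    fix x assume x: "x \<in> ball t \<delta>"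
    have x50: "x > 50" using Ux[OF x] by simp
    have sub2: "{x..2*x} \<subseteq> S0" using x50 by auto
    obtain B0 where B0: "B0 \<ge> 0" "\<And>s. s \<in> {x..2*x} \<Longrightarrow> \<bar>nderiv 0 g s\<bar> \<le> B0"
      using cont_bound[OF smooth_cont_on[OF sg sub2, of 0]] by blast
    obtain B1 where B1: "B1 \<ge> 0" "\<And>s. s \<in> {x..2*x} \<Longrightarrow> \<bar>nderiv 1 g s\<bar> \<le> B1"
      using cont_bound[OF smooth_cont_on[OF sg sub2, of 1]] by blast
    show "(\<lambda>u. (u ^ j * g (x * u) - g x) / (u - 1)) integrable_on {1..2}"
      by (rule J_facts(1)[OF sg x50, of B0 B1]) (use B0 B1 in \<open>auto simp: nderiv_1\<close>)
  qed auto
qed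

lemma J_nderiv: "x \<in> S0 \<Longrightarrow> nderiv j (Jj 0 (nderiv m lam)) x = Jj j (nderiv (m + j) lam) x"
proof (induction j arbitrary: x)
  case 0 then show ?case by simp
next
  case (Suc j)
  have "nderiv (Suc j) (Jj 0 (nderiv m lam)) x = deriv (Jj j (nderiv (m + j) lam)) x"
    unfolding nderiv_Suc' by (rule deriv_cong_ev) (use Suc eventually_nhds_in_open[of S0 x] in \<open>auto elim!: eventually_mono\<close>)
  also have "\<dots> = Jj (Suc j) (deriv (nderiv (m + j) lam)) x"
    by (rule DERIV_imp_deriv[OF J_deriv]) (use Suc.prems smooth_nderiv[OF lamsm] in auto)
  finally show ?case by (simp add: nderiv_Suc')
qed

lemma J_smooth: "smooth_on S0 (Jj 0 (nderiv m lam))"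
  unfolding smooth_on_def
proof (intro allI ballI)
  fix j x assume x: "x \<in> S0"
  have "Jj j (nderiv (m + j) lam) differentiable (at x)"
    using J_deriv[of "nderiv (m + j) lam" x j] smooth_nderiv[OF lamsm] x by (auto simp: real_differentiable_def)
  then show "nderiv j (Jj 0 (nderiv m lam)) differentiable (at x)"
    by (rule differentiable_local'[of _ _ S0]) (use J_nderiv x in auto)
qed

lemma J_bound:
  assumes t: "t \<ge> T"
  shows "\<bar>Jj j (nderiv m lam) t\<bar> \<le> (real j * 2 ^ j * (2 * D m) + 2 ^ j * (2 * D (Suc m))) * lam t / t ^ m"
proof -
  have tp: "t > 50" "t > 0" using T_facts[OF t] by auto
  have lp: "lam t > 0" using lampos tp by auto
  have bs: "\<bar>nderiv k lam s\<bar> \<le> 2 * D k * lam t / t ^ k" if s: "s \<in> {t..2*t}" for s k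
  proof -
    have sT: "s \<ge> T" using s t by auto
    have "\<bar>nderiv k lam s\<bar> \<le> D k * lam s / s ^ k" by (rule Dbd[OF sT])
    also have "\<dots> \<le> D k * (2 * lam t) / t ^ k"
    proof (rule frac_le)
      show "0 \<le> D k * (2 * lam t)" using Dnn lp by simp
      show "D k * lam s \<le> D k * (2 * lam t)" using growth2[OF t] s Dnn by (intro mult_left_mono) auto
      show "0 < t ^ k" using tp by simp
      show "t ^ k \<le> s ^ k" using s tp by (intro power_mono) auto
    qed
    finally show ?thesis by (simp add: mult.assoc mult.left_commute)
  qed
  define B where "B = real j * 2 ^ j * (2 * D m * lam t / t ^ m) + 2 ^ j * t * (2 * D (Suc m) * lam t / t ^ Suc m)"
  have "\<bar>Jj j (nderiv m lam) t\<bar> \<le> integral {1..2::real} (\<lambda>_. B)"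
    unfolding Jj_def
  proof (rule int_abs_bound)
    have A: "\<And>s. s \<in> {t..2*t} \<Longrightarrow> \<bar>nderiv m lam s\<bar> \<le> 2 * D m * lam t / t ^ m \<and>
        \<bar>deriv (nderiv m lam) s\<bar> \<le> 2 * D (Suc m) * lam t / t ^ Suc m"
    proof -
      fix s assume s: "s \<in> {t..2*t}"
      have "deriv (nderiv m lam) s = nderiv (Suc m) lam s" by (simp add: nderiv_Suc')
      then show "\<bar>nderiv m lam s\<bar> \<le> 2 * D m * lam t / t ^ m \<and>
        \<bar>deriv (nderiv m lam) s\<bar> \<le> 2 * D (Suc m) * lam t / t ^ Suc m"
        using bs[OF s, of m] bs[OF s, of "Suc m"] by simp
    qed
    show "(\<lambda>u. (u ^ j * nderiv m lam (t * u) - nderiv m lam t) / (u - 1)) integrable_on {1..2}"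
      by (rule J_facts(1)[OF smooth_nderiv[OF lamsm] tp(1) A])
    show "\<bar>(u ^ j * nderiv m lam (t * u) - nderiv m lam t) / (u - 1)\<bar> \<le> B" if "u \<in> {1..2}" for u
      unfolding B_def by (rule J_facts(2)[OF smooth_nderiv[OF lamsm] tp(1) A that])
  qed (rule integrable_const_ivl)
  also have "\<dots> = B" by simp
  also have "B = (real j * 2 ^ j * (2 * D m) + 2 ^ j * (2 * D (Suc m))) * lam t / t ^ m"
    unfolding B_def using tp by (simp add: field_simps)
  finally show ?thesis .
qed

lemma sym_J: "sym (\<lambda>t. lam t / t ^ m) (Jj 0 (nderiv m lam))"
  unfolding sym_def
proof (intro conjI allI)
  show "smooth_on S0 (Jj 0 (nderiv m lam))" by (rule J_smooth)
  fix j
  show "\<exists>c. \<forall>t\<ge>T. \<bar>nderiv j (Jj 0 (nderiv m lam)) t\<bar> \<le> c * (lam t / t ^ m) / t ^ j"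
  proof (intro exI allI impI)
    fix t assume t: "T \<le> t"
    have "nderiv j (Jj 0 (nderiv m lam)) t = Jj j (nderiv (m + j) lam) t"
      by (rule J_nderiv) (use T_facts[OF t] in auto)
    also have "\<bar>\<dots>\<bar> \<le> (real j * 2 ^ j * (2 * D (m + j)) + 2 ^ j * (2 * D (Suc (m + j)))) * lam t / t ^ (m + j)"
      by (rule J_bound[OF t])
    also have "\<dots> = (real j * 2 ^ j * (2 * D (m + j)) + 2 ^ j * (2 * D (Suc (m + j)))) * (lam t / t ^ m) / t ^ j"
      by (simp add: power_add field_simps)
    finally show "\<bar>nderiv j (Jj 0 (nderiv m lam)) t\<bar> \<le> (real j * 2 ^ j * (2 * D (m + j)) + 2 ^ j * (2 * D (Suc (m + j)))) * (lam t / t ^ m) / t ^ j" .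
  qed
qed

end

context lamctx begin

lemma pow_powr: "u > 0 \<Longrightarrow> u ^ j = u powr real j" by (simp add: powr_realpow)

lemma K_dom:
  assumes a: "a > 50" and m: "m \<ge> j + 2"
  obtains A where "A \<ge> 0" "\<And>x u. x \<ge> a \<Longrightarrow> u \<ge> 2 \<Longrightarrow> \<bar>u ^ j * nderiv m lam (x * u)\<bar> \<le> A * u powr (Cu - 2)"
proof -
  have sub: "{2*a..T} \<subseteq> S0" using a by auto
  obtain Mc where Mc: "Mc \<ge> 0" "\<And>s. s \<in> {2*a..T} \<Longrightarrow> \<bar>nderiv 0 (nderiv m lam) s\<bar> \<le> Mc"
    using cont_bound[OF smooth_cont_on[OF smooth_nderiv[OF lamsm] sub, of 0]] by blast
  have lT: "lam T > 0" using lampos T100 by auto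
  define A1 where "A1 = D m * lam T * T powr (-Cu) * a powr (Cu - real m)"
  define A2 where "A2 = Mc * (T / a) ^ j * (T / a) powr (2 - Cu)"
  have A1: "A1 \<ge> 0" unfolding A1_def using Dnn[of m] lT by simp
  have A2: "A2 \<ge> 0" unfolding A2_def using Mc a T100 by simp
  show ?thesis
  proof (rule that[of "A1 + A2"])
    show "0 \<le> A1 + A2" using A1 A2 by simp
    fix x u :: real assume x: "x \<ge> a" and u: "u \<ge> 2"
    have up: "u > 0" using u by simp
    have au: "a * u \<le> x * u" using x u by (intro mult_right_mono) auto
    have apos: "a > 0" using a by simp
    have "a * 2 \<le> a * u" using u apos by (intro mult_left_mono) auto
    then have s2a: "2 * a \<le> x * u" using au by linarith
    have upw: "u powr (Cu - 2) > 0" using up by simp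
    show "\<bar>u ^ j * nderiv m lam (x * u)\<bar> \<le> (A1 + A2) * u powr (Cu - 2)"
    proof (cases "x * u \<ge> T")
      case True
      define s where "s = x * u"
      have sT: "s \<ge> T" and sp: "s > 0" using True T100 by (auto simp: s_def)
      have "\<bar>nderiv m lam s\<bar> \<le> D m * lam s / s ^ m" by (rule Dbd[OF sT])
      also have "\<dots> \<le> D m * (lam T * (s / T) powr Cu) / s ^ m"
        using growth[OF order_refl sT] Dnn[of m] sp by (intro divide_right_mono mult_left_mono) auto
      also have "\<dots> = D m * lam T * T powr (-Cu) * s powr (Cu - real m)"
        using sp T100 by (simp add: powr_divide powr_diff powr_realpow powr_minus field_simps)
      also have "\<dots> \<le> D m * lam T * T powr (-Cu) * (a * u) powr (Cu - real m)"
      proof -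
        have "s powr (Cu - real m) \<le> (a * u) powr (Cu - real m)"
          by (rule powr_mono2') (use m Cu apos up au in \<open>auto simp: s_def\<close>)
        then show ?thesis using Dnn[of m] lT by (intro mult_left_mono) auto
      qed
      also have "\<dots> = A1 * u powr (Cu - real m)"
        unfolding A1_def using apos up by (simp add: powr_mult)
      finally have b1: "\<bar>nderiv m lam s\<bar> \<le> A1 * u powr (Cu - real m)" .
      have "\<bar>u ^ j * nderiv m lam s\<bar> = u ^ j * \<bar>nderiv m lam s\<bar>" using up by (simp add: abs_mult)
      also have "\<dots> \<le> u ^ j * (A1 * u powr (Cu - real m))" using b1 up by (intro mult_left_mono) auto
      also have "\<dots> = A1 * u powr (real j + Cu - real m)"
        using up by (simp add: pow_powr powr_add[symmetric] algebra_simps)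
      also have "\<dots> \<le> A1 * u powr (Cu - 2)"
        using A1 u m by (intro mult_left_mono powr_mono) auto
      also have "\<dots> \<le> (A1 + A2) * u powr (Cu - 2)" using A2 upw by (intro mult_right_mono) auto
      finally show ?thesis by (simp add: s_def)
    next
      case False
      have s: "x * u \<in> {2*a..T}" using False s2a by auto
      have b1: "\<bar>nderiv m lam (x * u)\<bar> \<le> Mc" using Mc(2)[OF s] by simp
      have uT: "u \<le> T / a" using au False apos by (simp add: field_simps)
      have b2: "u ^ j \<le> (T / a) ^ j" using uT up by (intro power_mono) auto
      have b3: "1 \<le> (T / a) powr (2 - Cu) * u powr (Cu - 2)"
      proof -
        have "(T / a) powr (Cu - 2) \<le> u powr (Cu - 2)" by (rule powr_mono2') (use Cu up uT in auto)
        moreover have "(T / a) powr (2 - Cu) * (T / a) powr (Cu - 2) = 1"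
          using apos T100 by (simp add: powr_add[symmetric])
        moreover have "(T / a) powr (2 - Cu) > 0" using apos T100 by simp
        ultimately show ?thesis by (metis mult_left_mono less_imp_le)
      qed
      have "\<bar>u ^ j * nderiv m lam (x * u)\<bar> \<le> (T / a) ^ j * Mc"
        using b1 b2 up apos T100 by (simp add: abs_mult) (intro mult_mono, auto)
      also have "\<dots> \<le> (T / a) ^ j * Mc * ((T / a) powr (2 - Cu) * u powr (Cu - 2))"
        using mult_left_mono[OF b3, of "(T / a) ^ j * Mc"] Mc(1) apos T100 by simp
      also have "\<dots> = A2 * u powr (Cu - 2)" unfolding A2_def by (simp add: algebra_simps)
      also have "\<dots> \<le> (A1 + A2) * u powr (Cu - 2)" using A1 upw by (intro mult_right_mono) auto
      finally show ?thesis .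
    qed
  qed
qed

definition Kk :: "nat \<Rightarrow> (real \<Rightarrow> real) \<Rightarrow> real \<Rightarrow> real" where
  "Kk j g t = integral {2..} (\<lambda>u. u ^ j * g (t * u) / (u - 1))"

lemma powr_int: "(\<lambda>u. A * u powr (Cu - 2)) integrable_on {2..}"
proof -
  have "Cu - 2 < -1" using Cu by simp
  from has_integral_powr_to_inf[OF this, of 2] have "(\<lambda>u. u powr (Cu - 2)) integrable_on {2..}"
    by (auto simp: integrable_on_def)
  from integrable_cmul[OF this, of A] show ?thesis by simp
qed

lemma div_le: "u \<ge> 2 \<Longrightarrow> \<bar>y / (u - 1)\<bar> \<le> \<bar>y\<bar>" for y u :: real
proof -
  assume u: "u \<ge> 2"
  have "\<bar>y / (u - 1)\<bar> = \<bar>y\<bar> / (u - 1)" using u by (simp add: abs_divide)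
  also have "\<dots> \<le> \<bar>y\<bar> / 1" using u by (intro divide_left_mono) auto
  finally show ?thesis by simp
qed

lemma K_int:
  assumes x: "x > 50" and m: "m \<ge> j + 2"
  shows "(\<lambda>u. u ^ j * nderiv m lam (x * u) / (u - 1)) absolutely_integrable_on {2..}"
proof -
  obtain A where A: "A \<ge> 0" "\<And>y u. y \<ge> x \<Longrightarrow> u \<ge> 2 \<Longrightarrow> \<bar>u ^ j * nderiv m lam (y * u)\<bar> \<le> A * u powr (Cu - 2)"
    using K_dom[OF x m] by blast
  show ?thesis
  proof (rule int_bound[OF _ _ powr_int[of A]])
    have xu: "x * u \<in> S0" if "u \<in> {2..}" for u
    proof -
      have "x * 1 \<le> x * u" using that x by (intro mult_left_mono) auto
      then have "50 < x * u" using x by linarith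
      then show ?thesis by simp
    qed
    have "continuous_on {2..} (\<lambda>u. nderiv m lam (x * u))"
      by (rule continuous_on_compose2[OF smooth_cont_on[OF lamsm, of S0 m, simplified]]) (use xu in \<open>auto intro!: continuous_intros\<close>)
    then show "continuous_on {2..} (\<lambda>u. u ^ j * nderiv m lam (x * u) / (u - 1))"
      by (auto intro!: continuous_intros)
    fix u :: real assume u: "u \<in> {2..}"
    show "\<bar>u ^ j * nderiv m lam (x * u) / (u - 1)\<bar> \<le> A * u powr (Cu - 2)"
      using div_le[of u "u ^ j * nderiv m lam (x * u)"] A(2)[of x u] u by auto
  qed auto
qed

lemma K_deriv:
  assumes t: "t > 50" and m: "m \<ge> j + 2"
  shows "(Kk j (nderiv m lam) has_real_derivative Kk (Suc j) (nderiv (Suc m) lam) t) (at t)"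
proof -
  define \<delta> where "\<delta> = (t - 50) / 2"
  define a where "a = t - \<delta>"
  have ab: "a > 50" "\<delta> > 0" unfolding a_def \<delta>_def using t by (simp_all add: field_simps)
  obtain A where A: "A \<ge> 0" "\<And>y u. y \<ge> a \<Longrightarrow> u \<ge> 2 \<Longrightarrow> \<bar>u ^ Suc j * nderiv (Suc m) lam (y * u)\<bar> \<le> A * u powr (Cu - 2)"
    using K_dom[OF ab(1), of "Suc j" "Suc m"] m by auto
  have Ux: "x \<ge> a" "x > 50" if "x \<in> ball t \<delta>" for x
    using that ab by (auto simp: a_def dist_real_def)
  show ?thesis unfolding Kk_def
  proof (rule DUI(2)[where U = "ball t \<delta>" and h = "\<lambda>u. A * u powr (Cu - 2)"])
    show "t \<in> ball t \<delta>" using ab by simp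
    show "(\<lambda>u. A * u powr (Cu - 2)) integrable_on {2..}" by (rule powr_int)
  next
    fix x u assume x: "x \<in> ball t \<delta>" and u: "u \<in> {2::real..}"
    have x50: "x > 50" using Ux[OF x] by simp
    have "x * 1 \<le> x * u" using x50 u by (intro mult_left_mono) auto
    then have "50 < x * u" using x50 by linarith
    then have xu: "x * u \<in> S0" by simp
    have h1: "((\<lambda>x. x * u) has_real_derivative u) (at x)" by (auto intro!: derivative_eq_intros)
    have h2: "((\<lambda>x. nderiv m lam (x * u)) has_real_derivative nderiv (Suc m) lam (x * u) * u) (at x)"
      using DERIV_chain2[OF smooth_DERIV[OF lamsm xu, of m] h1] .
    have "((\<lambda>x. u ^ j * nderiv m lam (x * u) / (u - 1)) has_real_derivative
        u ^ j * (nderiv (Suc m) lam (x * u) * u) / (u - 1)) (at x)"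
      by (intro DERIV_cdivide DERIV_cmult h2)
    then show "((\<lambda>x. u ^ j * nderiv m lam (x * u) / (u - 1)) has_real_derivative
        u ^ Suc j * nderiv (Suc m) lam (x * u) / (u - 1)) (at x)"
      by (rule DERIV_cong) (simp add: algebra_simps)
    show "\<bar>u ^ Suc j * nderiv (Suc m) lam (x * u) / (u - 1)\<bar> \<le> A * u powr (Cu - 2)"
      using div_le[of u "u ^ Suc j * nderiv (Suc m) lam (x * u)"] A(2)[OF Ux(1)[OF x], of u] u by auto
  next
    fix x assume x: "x \<in> ball t \<delta>"
    show "(\<lambda>u. u ^ j * nderiv m lam (x * u) / (u - 1)) integrable_on {2..}"
      using K_int[OF Ux(2)[OF x] m] by (auto simp: absolutely_integrable_on_def)
  qed auto
qed

lemma K_nderiv: "m \<ge> 2 \<Longrightarrow> x \<in> S0 \<Longrightarrow> nderiv j (Kk 0 (nderiv m lam)) x = Kk j (nderiv (m + j) lam) x"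
proof (induction j arbitrary: x)
  case 0 then show ?case by simp
next
  case (Suc j)
  have "nderiv (Suc j) (Kk 0 (nderiv m lam)) x = deriv (Kk j (nderiv (m + j) lam)) x"
    unfolding nderiv_Suc' by (rule deriv_cong_ev) (use Suc eventually_nhds_in_open[of S0 x] in \<open>auto elim!: eventually_mono\<close>)
  also have "\<dots> = Kk (Suc j) (nderiv (Suc (m + j)) lam) x"
    by (rule DERIV_imp_deriv[OF K_deriv]) (use Suc.prems in auto)
  finally show ?case by simp
qed

lemma K_smooth: "m \<ge> 2 \<Longrightarrow> smooth_on S0 (Kk 0 (nderiv m lam))"
  unfolding smooth_on_def
proof (intro allI ballI)
  fix j x assume m: "m \<ge> 2" and x: "x \<in> S0"
  have "(Kk j (nderiv (m + j) lam) has_real_derivative Kk (Suc j) (nderiv (Suc (m + j)) lam) x) (at x)"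
    by (rule K_deriv) (use m x in auto)
  then have "Kk j (nderiv (m + j) lam) differentiable (at x)" by (auto simp: real_differentiable_def)
  then show "nderiv j (Kk 0 (nderiv m lam)) differentiable (at x)"
    by (rule differentiable_local'[of _ _ S0]) (use K_nderiv m x in auto)
qed

definition I0 where "I0 = integral {2..} (\<lambda>u. u powr (Cu - 2))"

lemma K_bound:
  assumes t: "t \<ge> T" and m: "m \<ge> j + 2"
  shows "\<bar>Kk j (nderiv m lam) t\<bar> \<le> D m * I0 * lam t / t ^ m"
proof -
  have tp: "t > 50" "t > 0" using T_facts[OF t] by auto
  have lp: "lam t > 0" using lampos tp by auto
  define c where "c = D m * lam t / t ^ m"
  have "\<bar>Kk j (nderiv m lam) t\<bar> \<le> integral {2..} (\<lambda>u. c * u powr (Cu - 2))"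
    unfolding Kk_def
  proof (rule int_abs_bound)
    show "(\<lambda>u. u ^ j * nderiv m lam (t * u) / (u - 1)) integrable_on {2..}"
      using K_int[OF tp(1) m] by (auto simp: absolutely_integrable_on_def)
    show "(\<lambda>u. c * u powr (Cu - 2)) integrable_on {2..}" by (rule powr_int)
    fix u :: real assume u: "u \<in> {2..}"
    have up: "u > 0" using u by simp
    have tu1: "t * 1 \<le> t * u" using u tp by (intro mult_left_mono) auto
    then have tu: "t * u \<ge> T" using t by linarith
    have "\<bar>u ^ j * nderiv m lam (t * u) / (u - 1)\<bar> \<le> \<bar>u ^ j * nderiv m lam (t * u)\<bar>"
      using div_le u by simp
    also have "\<dots> = u ^ j * \<bar>nderiv m lam (t * u)\<bar>" using up by (simp add: abs_mult)
    also have "\<dots> \<le> u ^ j * (D m * lam (t * u) / (t * u) ^ m)"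
      using Dbd[OF tu] up by (intro mult_left_mono) auto
    also have "\<dots> \<le> u ^ j * (D m * (lam t * u powr Cu) / (t * u) ^ m)"
    proof -
      have "lam (t * u) \<le> lam t * (t * u / t) powr Cu" by (rule growth[OF t]) (use tu1 in simp)
      then have "lam (t * u) \<le> lam t * u powr Cu" using tp by simp
      then show ?thesis using Dnn[of m] up tp by (intro mult_left_mono divide_right_mono) auto
    qed
    also have "\<dots> = c * (u powr (real j + Cu - real m))"
      unfolding c_def using up tp by (simp add: pow_powr powr_add powr_diff power_mult_distrib field_simps)
    also have "\<dots> \<le> c * u powr (Cu - 2)"
      using m u Dnn[of m] lp tp unfolding c_def by (intro mult_left_mono powr_mono) auto
    finally show "\<bar>u ^ j * nderiv m lam (t * u) / (u - 1)\<bar> \<le> c * u powr (Cu - 2)" .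
  qed
  also have "\<dots> = c * I0" unfolding I0_def by simp
  finally show ?thesis unfolding c_def by (simp add: field_simps)
qed

lemma sym_K: "sym (\<lambda>t. lam t / t ^ 2) (Kk 0 (nderiv 2 lam))"
  unfolding sym_def
proof (intro conjI allI)
  show "smooth_on S0 (Kk 0 (nderiv 2 lam))" by (rule K_smooth) auto
  fix j
  show "\<exists>c. \<forall>t\<ge>T. \<bar>nderiv j (Kk 0 (nderiv 2 lam)) t\<bar> \<le> c * (lam t / t ^ 2) / t ^ j"
  proof (intro exI allI impI)
    fix t assume t: "T \<le> t"
    have "nderiv j (Kk 0 (nderiv 2 lam)) t = Kk j (nderiv (2 + j) lam) t"
      by (rule K_nderiv) (use T_facts[OF t] in auto)
    also have "\<bar>\<dots>\<bar> \<le> D (2 + j) * I0 * lam t / t ^ (2 + j)"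
      by (rule K_bound[OF t]) auto
    also have "\<dots> = D (2 + j) * I0 * (lam t / t ^ 2) / t ^ j"
      by (simp add: power_add field_simps power2_eq_square)
    finally show "\<bar>nderiv j (Kk 0 (nderiv 2 lam)) t\<bar> \<le> D (2 + j) * I0 * (lam t / t ^ 2) / t ^ j" .
  qed
qed

end

context lamctx begin

lemma sym_local:
  assumes "sym u f" "\<And>t. t \<in> S0 \<Longrightarrow> f t = g t"
  shows "sym u g"
  unfolding sym_def
proof (intro conjI allI)
  show "smooth_on S0 g" by (rule smooth_local[OF _ assms(2)]) (use assms(1) in \<open>auto simp: sym_def\<close>)
  fix j obtain c where c: "\<forall>t\<ge>T. \<bar>nderiv j f t\<bar> \<le> c * u t / t ^ j" using assms(1) unfolding sym_def by blast
  have "nderiv j f t = nderiv j g t" if "t \<ge> T" for t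
    by (rule nderiv_local[of S0, OF _ assms(2)]) (use T_facts[OF that] in auto)
  then show "\<exists>c. \<forall>t\<ge>T. \<bar>nderiv j g t\<bar> \<le> c * u t / t ^ j" using c by (intro exI[of _ c]) auto
qed

lemma Jrep:
  assumes t: "t > 0"
  shows "integral {t..2*t} (\<lambda>s. (nderiv 2 lam s - nderiv 2 lam t) / (s - t)) = Jj 0 (nderiv 2 lam) t"
proof -
  define F where "F s = (nderiv 2 lam s - nderiv 2 lam t) / (s - t)" for s
  have img: "(\<lambda>x. x / t) ` {t..2*t} = {1..2}"
  proof
    show "(\<lambda>x. x / t) ` {t..2*t} \<subseteq> {1..2}" using t by (auto simp: field_simps)
    show "{1..2} \<subseteq> (\<lambda>x. x / t) ` {t..2*t}"
    proof
      fix y :: real assume y: "y \<in> {1..2}"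
      have "t * y \<in> {t..2*t}" using y t by (auto simp: mult_le_cancel_left1)
      moreover have "y = t * y / t" using t by simp
      ultimately show "y \<in> (\<lambda>x. x / t) ` {t..2*t}" by blast
    qed
  qed
  have "integral {1..2} (\<lambda>x. F (t * x)) = (1 / t) * integral {t..2*t} F"
    using integral_stretch_real[where m=t and f=F and a=t and b="2*t"] t img by simp
  moreover have "(\<lambda>u. (u ^ 0 * nderiv 2 lam (t * u) - nderiv 2 lam t) / (u - 1)) = (\<lambda>u. t * F (t * u))"
  proof
    fix u show "(u ^ 0 * nderiv 2 lam (t * u) - nderiv 2 lam t) / (u - 1) = t * F (t * u)"
    proof (cases "u = 1")
      case False
      then have "t * u - t = t * (u - 1)" "u - 1 \<noteq> 0" by (auto simp: algebra_simps)
      then show ?thesis using t unfolding F_def by (simp add: field_simps)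
    qed (simp add: F_def)
  qed
  moreover have "integral {1..2} (\<lambda>u. t * F (t * u)) = t * integral {1..2} (\<lambda>u. F (t * u))"
    using integral_cmul[where c=t and f="\<lambda>u. F (t * u)" and S="{1..2}"] by simp
  ultimately have "Jj 0 (nderiv 2 lam) t = integral {t..2*t} F" unfolding Jj_def using t by simp
  then show ?thesis unfolding F_def by simp
qed

lemma Krep:
  assumes t: "t > 50"
  shows "integral {2*t..} (\<lambda>s. nderiv 2 lam s / (s - t)) = Kk 0 (nderiv 2 lam) t"
proof -
  define F where "F s = nderiv 2 lam s / (s - t)" for s
  have tp: "t > 0" using t by simp
  have eq: "(\<lambda>x. \<bar>t\<bar> * F (t * x)) = (\<lambda>u. u ^ 0 * nderiv 2 lam (t * u) / (u - 1))"
  proof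
    fix u show "\<bar>t\<bar> * F (t * u) = u ^ 0 * nderiv 2 lam (t * u) / (u - 1)"
    proof (cases "u = 1")
      case False
      then have "t * u - t = t * (u - 1)" "u - 1 \<noteq> 0" by (auto simp: algebra_simps)
      then show ?thesis using tp unfolding F_def by (simp add: field_simps)
    qed (simp add: F_def)
  qed
  have img: "(\<lambda>u. t * u) ` {2..} = {2*t..}"
  proof
    show "(\<lambda>u. t * u) ` {2..} \<subseteq> {2*t..}" using tp by (auto simp: mult.commute)
    show "{2*t..} \<subseteq> (\<lambda>u. t * u) ` {2..}"
    proof
      fix y assume y: "y \<in> {2*t..}"
      have "y / t \<in> {2..}" using y tp by (auto simp: field_simps)
      moreover have "y = t * (y / t)" using tp by simp
      ultimately show "y \<in> (\<lambda>u. t * u) ` {2..}" by blast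
    qed
  qed
  have ai: "(\<lambda>x. \<bar>t\<bar> * F (t * x)) absolutely_integrable_on {2..}"
    unfolding eq using K_int[OF t, of 0 2] by simp
  have "F absolutely_integrable_on (\<lambda>u. t * u) ` {2..} \<and>
      integral ((\<lambda>u. t * u) ` {2..}) F = integral {2..} (\<lambda>x. \<bar>t\<bar> * F (t * x))"
  proof (rule has_absolute_integral_change_of_variables_1'[THEN iffD1])
    show "{2::real..} \<in> sets lebesgue" by simp
    show "\<And>x. x \<in> {2..} \<Longrightarrow> ((*) t has_real_derivative t) (at x within {2..})"
      by (auto intro!: derivative_eq_intros)
    show "inj_on ((*) t) {2..}" using tp by (auto simp: inj_on_def)
  qed (use ai in auto)
  then have "integral {2*t..} F = integral {2..} (\<lambda>x. \<bar>t\<bar> * F (t * x))" using img by simp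
  also have "\<dots> = Kk 0 (nderiv 2 lam) t" unfolding eq Kk_def ..
  finally show ?thesis unfolding F_def .
qed

definition w where "w t = lam t * ln t / t ^ 2" for t

lemma wnn_w: "wnn w"
  unfolding wnn_def w_def
proof (intro allI impI)
  fix t assume t: "T \<le> t"
  have "lam t > 0" "ln t \<ge> 1" using lampos T_facts[OF t] ln_ge1[OF t] by auto
  then show "0 \<le> lam t * ln t / t ^ 2" by simp
qed

lemma to_w: "sym (\<lambda>t. lam t / t ^ 2) f \<Longrightarrow> sym w f"
proof (rule sym_mono[OF _ wnn_lam, where K=1])
  fix t assume t: "t \<ge> T"
  have lp: "lam t > 0" using lampos T_facts[OF t] by auto
  have "lam t / t ^ 2 * 1 \<le> lam t / t ^ 2 * ln t"
    using ln_ge1[OF t] lp by (intro mult_left_mono) auto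
  then show "lam t / t ^ 2 \<le> 1 * w t" by (simp add: w_def)
qed

definition Bfun where
  "Bfun t = (ln 2 - 1/2) * nderiv 2 lam t + Jj 0 (nderiv 2 lam) t + nderiv 2 lam t * (ln t - ln (lam t))
     + Kk 0 (nderiv 2 lam) t - (nderiv 1 lam t)\<^sup>2 / (2 * lam t)" for t

lemma sym_B: "sym w Bfun"
proof -
  have s1: "sym w (nderiv 2 lam)" by (rule to_w[OF sym_L])
  have s2: "sym w (Jj 0 (nderiv 2 lam))" by (rule to_w[OF sym_J])
  have s4: "sym w (Kk 0 (nderiv 2 lam))" by (rule to_w[OF sym_K])
  have s3: "sym w (\<lambda>t. nderiv 2 lam t * (1 * ln t + (-1) * ln (lam t)))"
  proof (rule sym_mono[OF sym_mult[OF sym_L sym_lin[OF sym_ln sym_lnlam wnn_ln] wnn_lam wnn_ln], where K=1])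
    show "wnn (\<lambda>t. lam t / t ^ 2 * ln t)" by (intro wnn_mult wnn_lam wnn_ln)
    fix t show "lam t / t ^ 2 * ln t \<le> 1 * w t" by (simp add: w_def)
  qed
  have s5: "sym w (\<lambda>t. nderiv 1 lam t * q t)"
  proof (rule sym_mono[OF sym_mult[OF sym_L sym_q wnn_lam wnn_inv], where K=1])
    show "wnn (\<lambda>t. lam t / t ^ 1 * (1 / t))" by (intro wnn_mult wnn_lam wnn_inv)
    fix t assume t: "t \<ge> T"
    have e: "lam t / t ^ 1 * (1 / t) = lam t / t ^ 2 * 1" by (simp add: power2_eq_square)
    have lp: "lam t > 0" using lampos T_facts[OF t] by auto
    have "lam t / t ^ 2 * 1 \<le> lam t / t ^ 2 * ln t"
      using ln_ge1[OF t] lp by (intro mult_left_mono) auto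
    then show "lam t / t ^ 1 * (1 / t) \<le> 1 * w t" unfolding e by (simp add: w_def)
  qed
  have a1: "sym w (\<lambda>t. (ln 2 - 1/2) * nderiv 2 lam t + 1 * Jj 0 (nderiv 2 lam) t)"
    by (rule sym_lin[OF s1 s2 wnn_w])
  have a2: "sym w (\<lambda>t. 1 * ((ln 2 - 1/2) * nderiv 2 lam t + 1 * Jj 0 (nderiv 2 lam) t)
      + 1 * (nderiv 2 lam t * (1 * ln t + (-1) * ln (lam t))))"
    by (rule sym_lin[OF a1 s3 wnn_w])
  have a3: "sym w (\<lambda>t. 1 * (1 * ((ln 2 - 1/2) * nderiv 2 lam t + 1 * Jj 0 (nderiv 2 lam) t)
      + 1 * (nderiv 2 lam t * (1 * ln t + (-1) * ln (lam t)))) + 1 * Kk 0 (nderiv 2 lam) t)"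
    by (rule sym_lin[OF a2 s4 wnn_w])
  have a4: "sym w (\<lambda>t. 1 * (1 * (1 * ((ln 2 - 1/2) * nderiv 2 lam t + 1 * Jj 0 (nderiv 2 lam) t)
      + 1 * (nderiv 2 lam t * (1 * ln t + (-1) * ln (lam t)))) + 1 * Kk 0 (nderiv 2 lam) t)
      + (- 1/2) * (nderiv 1 lam t * q t))"
    by (rule sym_lin[OF a3 s5 wnn_w])
  show ?thesis
  proof (rule sym_local[OF a4])
    fix t :: real assume t: "t \<in> S0"
    have "lam t > 0" using lampos t by auto
    then show "1 * (1 * (1 * ((ln 2 - 1/2) * nderiv 2 lam t + 1 * Jj 0 (nderiv 2 lam) t)
      + 1 * (nderiv 2 lam t * (1 * ln t + (-1) * ln (lam t)))) + 1 * Kk 0 (nderiv 2 lam) t)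
      + (- 1/2) * (nderiv 1 lam t * q t) = Bfun t"
      unfolding Bfun_def q_def by (simp add: power2_eq_square field_simps)
  qed
qed

lemma ln_le_powr: "t > 0 \<Longrightarrow> ln t \<le> 4 * t powr (1/4)" for t :: real
proof -
  assume t: "t > 0"
  have "ln (t powr (1/4)) \<le> t powr (1/4) - 1" using t by (intro ln_le_minus_one) simp
  moreover have "ln (t powr (1/4)) = ln t / 4" using t by (simp add: ln_powr)
  ultimately show ?thesis by simp
qed

lemma w_le:
  assumes t: "t \<ge> T"
  shows "w t \<le> (4 * lam T * T powr (- Cu)) * t powr (Cu - 7/4)"
proof -
  have tp: "t > 0" using T_facts[OF t] by simp
  have lT: "lam T > 0" using lampos T100 by simp
  have l0: "lam t > 0" using lampos T_facts[OF t] by simp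
  have lnt: "ln t \<ge> 0" using ln_ge1[OF t] by simp
  have "w t = lam t * ln t / t ^ 2" by (simp add: w_def)
  also have "\<dots> \<le> (lam T * (t / T) powr Cu) * (4 * t powr (1/4)) / t ^ 2"
    using growth[OF order_refl t] ln_le_powr[OF tp] l0 lnt tp by (intro divide_right_mono mult_mono) auto
  also have "\<dots> = (4 * lam T * T powr (- Cu)) * t powr (Cu - 7/4)"
  proof -
    have TT: "T > 0" using T100 by simp
    have e1: "(t / T) powr Cu = T powr (-Cu) * t powr Cu" using tp TT by (simp only: powr_divide powr_minus) (simp add: divide_inverse)
    have e2: "t powr (Cu - 7/4) = t powr Cu * t powr (1/4) / t ^ 2"
    proof -
      have "t powr (Cu - 7/4) = t powr (Cu + 1/4 - 2)" by simp
      also have "\<dots> = t powr Cu * t powr (1/4) / t powr 2" by (simp only: powr_diff powr_add)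
      also have "t powr 2 = t ^ 2" using tp by (simp add: powr_numeral)
      finally show ?thesis .
    qed
    show ?thesis unfolding e1 e2 by (simp add: mult_ac)
  qed
  finally show ?thesis .
qed

lemma w_int: "w absolutely_integrable_on {T..}"
proof (rule int_bound[where g = "\<lambda>t. (4 * lam T * T powr (- Cu)) * t powr (Cu - 7/4)"])
  show "continuous_on {T..} w"
  proof -
    have "{T..} \<subseteq> S0" using T100 by auto
    from smooth_cont_on[OF lamsm this, of 0] have "continuous_on {T..} lam" by simp
    then show ?thesis unfolding w_def using T100 by (auto intro!: continuous_intros)
  qed
  have "Cu - 7/4 < -1" using Cu by simp
  from has_integral_powr_to_inf[OF this, of T] T100
  have "(\<lambda>t. t powr (Cu - 7/4)) integrable_on {T..}" by (auto simp: integrable_on_def)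
  from integrable_cmul[OF this, of "4 * lam T * T powr (- Cu)"]
  show "(\<lambda>t. (4 * lam T * T powr (- Cu)) * t powr (Cu - 7/4)) integrable_on {T..}" by simp
  fix t assume t: "t \<in> {T..}"
  have "w t \<ge> 0" using wnn_w t by (auto simp: wnn_def)
  then show "\<bar>w t\<bar> \<le> (4 * lam T * T powr (- Cu)) * t powr (Cu - 7/4)" using w_le t by simp
qed auto

lemma w_lim: "(w \<longlongrightarrow> 0) at_top"
proof (rule Lim_null_comparison)
  show "\<forall>\<^sub>F t in at_top. norm (w t) \<le> (4 * lam T * T powr (- Cu)) * t powr (Cu - 7/4)"
    using eventually_ge_at_top[of T]
  proof (rule eventually_mono)
    fix t assume t: "T \<le> t"
    have "w t \<ge> 0" using wnn_w t by (auto simp: wnn_def)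
    then show "norm (w t) \<le> (4 * lam T * T powr (- Cu)) * t powr (Cu - 7/4)" using w_le t by simp
  qed
  have "((\<lambda>t. t powr (Cu - 7/4)) \<longlongrightarrow> 0) at_top"
    by (rule tendsto_neg_powr) (use Cu in \<open>auto intro: filterlim_ident\<close>)
  from tendsto_mult_right_zero[OF this, of "4 * lam T * T powr (- Cu)"]
  show "((\<lambda>t. (4 * lam T * T powr (- Cu)) * t powr (Cu - 7/4)) \<longlongrightarrow> 0) at_top" by simp
qed

lemma fourier_w: "fourier T w"
proof
  show "T > 0" using T100 by simp
  show "\<And>t. T \<le> t \<Longrightarrow> 0 \<le> w t" using wnn_w by (auto simp: wnn_def)
  show "(w \<longlongrightarrow> 0) at_top" by (rule w_lim)
  have "w integrable_on {T..} \<inter> {0..}" using w_int T100 by (auto simp: absolutely_integrable_on_def Int_absorb2)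
  then have "(\<lambda>t. if t \<in> {T..} then w t else 0) integrable_on {0..}" by (rule integrable_restrict_Int[THEN iffD2])
  then show "(\<lambda>t. if T \<le> t then w t else 0) integrable_on {0..}" by simp
qed

end

locale hctx = lamctx +
  fixes psi :: "real \<Rightarrow> real"
  assumes psism: "smooth_on {0<..} psi" and psi01: "\<forall>x\<ge>0. 0 \<le> psi x \<and> psi x \<le> 1"
    and psi0: "\<forall>x. 0 \<le> x \<and> x \<le> T \<longrightarrow> psi x = 0" and psi1: "\<forall>x\<ge>2*T. psi x = 1"
begin

lemma sym_psi: "sym (\<lambda>t. 1) psi"
  unfolding sym_def
proof (intro conjI allI)
  show "smooth_on S0 psi" by (rule smooth_subset[OF psism]) auto
  fix j
  show "\<exists>c. \<forall>t\<ge>T. \<bar>nderiv j psi t\<bar> \<le> c * 1 / t ^ j"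
  proof (cases j)
    case 0 then show ?thesis using psi01 T_facts by (intro exI[of _ 1]) force
  next
    case (Suc k)
    have sub: "{T..2*T} \<subseteq> {0<..}" using T100 by auto
    obtain M where M: "M \<ge> 0" "\<And>s. s \<in> {T..2*T} \<Longrightarrow> \<bar>nderiv j psi s\<bar> \<le> M"
      using cont_bound[OF smooth_cont_on[OF psism sub, of j]] by blast
    show ?thesis
    proof (intro exI[of _ "M * (2 * T) ^ j"] allI impI)
      fix t assume t: "T \<le> t"
      have tp: "t > 0" using T_facts[OF t] by simp
      show "\<bar>nderiv j psi t\<bar> \<le> M * (2 * T) ^ j * 1 / t ^ j"
      proof (cases "t \<le> 2 * T")
        case True
        have "M * 1 \<le> M * ((2 * T) ^ j / t ^ j)"
        proof (rule mult_left_mono)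
          have "t ^ j \<le> (2 * T) ^ j" using True tp by (intro power_mono) auto
          then show "1 \<le> (2 * T) ^ j / t ^ j" using tp by simp
        qed (rule M(1))
        then show ?thesis using M(2)[of t] True t by simp
      next
        case False
        have "nderiv j psi t = nderiv j (\<lambda>x. 1) t"
          by (rule nderiv_local[of "{2*T<..}"]) (use psi1 False in auto)
        then show ?thesis using M(1) T100 tp Suc by (simp add: nderiv_const)
      qed
    qed
  qed
qed

lemma h_eq:
  assumes t: "t \<in> S0"
  shows "H_fun lam psi T t = 4 * (Bfun t * psi t)"
proof (cases "t \<le> T")
  case True then show ?thesis using psi0 t by (simp add: H_fun_def)
next
  case False
  have tp: "t > 50" "t > 0" using t by auto
  have lp: "lam t > 0" using lampos tp by auto
  have e: "ln (t / lam t) = ln t - ln (lam t)" using tp lp by (simp add: ln_div)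
  show ?thesis using False unfolding H_fun_def Bfun_def Jrep[OF tp(2)] Krep[OF tp(1)] e
    by (simp add: algebra_simps)
qed

lemma sym_h: "sym w (H_fun lam psi T)"
proof -
  have a: "sym (\<lambda>t. w t * 1) (\<lambda>t. Bfun t * psi t)"
    by (rule sym_mult[OF sym_B sym_psi wnn_w wnn_const]) simp
  have b: "sym w (\<lambda>t. Bfun t * psi t)" by (rule sym_mono[OF a, where K=1]) (use wnn_w in \<open>auto simp: wnn_def\<close>)
  have c: "sym w (\<lambda>t. 4 * (Bfun t * psi t) + 0 * (Bfun t * psi t))" by (rule sym_lin[OF b b wnn_w])
  show ?thesis by (rule sym_local[OF c]) (simp add: h_eq)
qed

lemma symF_h: "fourier.symF T w (H_fun lam psi T)"
proof -
  interpret F: fourier T w by (rule fourier_w)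
  have s1: "smooth_on S0 (H_fun lam psi T)" using sym_h by (simp add: sym_def)
  have s2: "smooth_on {..<T} (H_fun lam psi T)"
    by (rule smooth_local[OF _ _ smooth_const[of _ 0]]) (auto simp: H_fun_def)
  have "smooth_on UNIV (H_fun lam psi T)"
  proof -
    have "UNIV = S0 \<union> {..<T}" using T100 by auto
    then show ?thesis using s1 s2 unfolding smooth_on_def by (metis Un_iff)
  qed
  moreover have "\<forall>t<T. H_fun lam psi T t = 0" by (simp add: H_fun_def)
  moreover have "\<forall>j. \<exists>c. \<forall>t\<ge>T. \<bar>nderiv j (H_fun lam psi T) t\<bar> \<le> c * w t / t ^ j"
    using sym_h by (simp add: sym_def)
  ultimately show ?thesis unfolding F.symF_def by blast
qed

end

context hctx begin

lemma lnR_bound: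
  assumes R: "R \<ge> T" and t: "t \<ge> R"
  shows "ln t \<le> 5 * ln R * (t / R) powr (1/4)"
proof -
  have Rp: "R > 0" using T_facts[OF R] by simp
  have lnR: "ln R \<ge> 1" using ln_ge1[OF R] .
  have q: "(t / R) powr (1/4) \<ge> 1" using t Rp by (intro ge_one_powr_ge_zero) (auto simp: field_simps)
  have "ln t = ln R + ln (t / R)" using Rp t by (simp add: ln_div)
  also have "ln (t / R) \<le> 4 * (t / R) powr (1/4)" using Rp t by (intro ln_le_powr) simp
  also have "ln R \<le> ln R * (t / R) powr (1/4)" using q lnR by (simp add: mult_le_cancel_left1)
  also have "4 * (t / R) powr (1/4) \<le> 4 * ln R * (t / R) powr (1/4)"
    using mult_right_mono[OF lnR, of "(t / R) powr (1/4)"] q by simp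
  finally show ?thesis by simp
qed

lemma small_bound:
  assumes p: "fourier.symF T w p"
  obtains Ck where "Ck \<ge> 0" "\<And>\<xi>. 0 < \<xi> \<Longrightarrow> \<xi> \<le> 1/100 \<Longrightarrow>
     \<bar>fourier.V p \<xi>\<bar> \<le> Ck * integral {100..1/\<xi>} (\<lambda>\<sigma>. lam \<sigma> * ln \<sigma> / \<sigma>) + Ck * lam (1/\<xi>) * ln (1/\<xi>)"
proof -
  interpret F: fourier T w by (rule fourier_w)
  obtain c where c: "c \<ge> 0" "\<And>\<xi> B. \<xi> > 0 \<Longrightarrow> B integrable_on {0..} \<Longrightarrow> (\<And>t. t \<ge> 0 \<Longrightarrow> 0 \<le> B t) \<Longrightarrow>
      (\<And>t. t \<ge> T \<Longrightarrow> c * w t * min t (1 / \<xi>) \<le> B t) \<Longrightarrow> \<bar>F.V p \<xi>\<bar> \<le> integral {0..} B"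
    using F.V_small[OF p] by blast
  define a where "a = Cu + 1/4"
  have a: "a < 1" "a - 2 < -1" using Cu by (auto simp: a_def)
  define IW where "IW = integral {T..} w"
  have wi: "w integrable_on {T..}" using w_int by (auto simp: absolutely_integrable_on_def)
  have IW: "IW \<ge> 0" unfolding IW_def by (rule integral_nonneg[OF wi]) (use wnn_w in \<open>auto simp: wnn_def\<close>)
  define g where "g \<sigma> = lam \<sigma> * ln \<sigma>" for \<sigma>
  have gc: "continuous_on {100..T} g"
  proof -
    have "{100..T} \<subseteq> S0" by auto
    from smooth_cont_on[OF lamsm this, of 0] have "continuous_on {100..T} lam" by simp
    then show ?thesis unfolding g_def by (auto intro!: continuous_intros)
  qed
  obtain x0 where x0: "x0 \<in> {100..T}" "\<And>y. y \<in> {100..T} \<Longrightarrow> g x0 \<le> g y"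
    using continuous_attains_inf[OF compact_Icc _ gc] T100 by auto
  define m0 where "m0 = g x0"
  have m0: "m0 > 0" unfolding m0_def g_def using x0(1) lampos[of x0] by (auto intro!: mult_pos_pos)
  define Ck where "Ck = c + 5 * c / (1 - a) + c * T * IW / m0"
  have Ck1: "c \<le> Ck" "5 * c / (1 - a) \<le> Ck" "c * T * IW / m0 \<le> Ck"
    unfolding Ck_def using c(1) a IW m0 T100 by auto
  show ?thesis
  proof (rule that[of Ck])
    show "Ck \<ge> 0" using Ck1 c(1) by linarith
    fix \<xi> :: real assume xi: "0 < \<xi>" "\<xi> \<le> 1/100"
    define R where "R = 1 / \<xi>"
    have R100: "R \<ge> 100" using xi by (simp add: R_def field_simps)
    have R50: "R \<in> S0" using R100 by simp
    have lamR: "lam R > 0" using lampos R100 by simp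
    have lnR: "ln R > 0" using R100 by simp
    have gi: "(\<lambda>\<sigma>. lam \<sigma> * ln \<sigma> / \<sigma>) integrable_on {100..R}"
    proof -
      have "{100..R} \<subseteq> S0" by auto
      from smooth_cont_on[OF lamsm this, of 0] have "continuous_on {100..R} lam" by simp
      then have "continuous_on {100..R} (\<lambda>\<sigma>. lam \<sigma> * ln \<sigma> / \<sigma>)" by (auto intro!: continuous_intros)
      then show ?thesis by (rule integrable_continuous_interval)
    qed
    have gnn: "0 \<le> lam \<sigma> * ln \<sigma> / \<sigma>" if s: "\<sigma> \<in> {100..R}" for \<sigma>
    proof -
      have "lam \<sigma> > 0" "ln \<sigma> > 0" "\<sigma> > 0" using lampos[of \<sigma>] s by auto
      then show ?thesis by simp
    qed
    define I where "I = integral {100..R} (\<lambda>\<sigma>. lam \<sigma> * ln \<sigma> / \<sigma>)"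
    have I0: "I \<ge> 0" unfolding I_def by (rule integral_nonneg[OF gi gnn])
    have goal: "\<bar>F.V p \<xi>\<bar> \<le> Ck * I + Ck * (lam R * ln R)"
    proof (cases "R \<ge> T")
      case True
      define K2 where "K2 = 5 * c * R * lam R * ln R * R powr (- a)"
      have K2: "K2 \<ge> 0" unfolding K2_def using c(1) R100 lamR lnR by simp
      define B1 where "B1 t = (if t \<in> {T..R} then c * (lam t * ln t / t) else 0)" for t
      define B2 where "B2 t = (if t \<in> {R..} then K2 * t powr (a - 2) else 0)" for t
      have f1i: "(\<lambda>t. c * (lam t * ln t / t)) integrable_on {T..R}"
      proof -
        have "(\<lambda>\<sigma>. lam \<sigma> * ln \<sigma> / \<sigma>) integrable_on {T..R}" by (rule integrable_on_subinterval[OF gi]) (use T100 in auto)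
        from integrable_cmul[OF this, of c] show ?thesis by simp
      qed
      have f2i: "((\<lambda>t. K2 * t powr (a - 2)) has_integral K2 * (R powr (a - 1) / (1 - a))) {R..}"
      proof -
        have e: "- (R powr (a - 2 + 1)) / (a - 2 + 1) = R powr (a - 1) / (1 - a)"
        proof -
          have "a - 2 + 1 = -(1 - a)" by simp
          then show ?thesis by (simp only: minus_divide_divide) simp
        qed
        have "((\<lambda>t. t powr (a - 2)) has_integral - (R powr (a - 2 + 1)) / (a - 2 + 1)) {R..}"
          using has_integral_powr_to_inf[OF a(2), of R] R100 by simp
        then have "((\<lambda>t. t powr (a - 2)) has_integral R powr (a - 1) / (1 - a)) {R..}"
          unfolding e .
        from has_integral_cmul[OF this, of K2] show ?thesis by simp
      qed
      have B1i: "B1 integrable_on {0..}" and B1v: "integral {0..} B1 = c * integral {T..R} (\<lambda>t. lam t * ln t / t)"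
      proof -
        have e1: "{T..R} \<inter> {0..} = {T..R}" using T100 by auto
        show "B1 integrable_on {0..}" unfolding B1_def
          by (rule integrable_restrict_Int[THEN iffD2]) (unfold e1, rule f1i)
        have "integral {0..} B1 = integral {T..R} (\<lambda>t. c * (lam t * ln t / t))"
          unfolding B1_def integral_restrict_Int e1 ..
        also have "integral {T..R} (\<lambda>t. c * (lam t * ln t / t)) = c * integral {T..R} (\<lambda>t. lam t * ln t / t)"
          using integral_cmul[where c=c and f="\<lambda>t. lam t * ln t / t" and S="{T..R}"] by (simp only: real_scaleR_def)
        finally show "integral {0..} B1 = c * integral {T..R} (\<lambda>t. lam t * ln t / t)" .
      qed
      have B2i: "B2 integrable_on {0..}" and B2v: "integral {0..} B2 = K2 * (R powr (a - 1) / (1 - a))"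
      proof -
        have e: "{R..} \<inter> {0..} = {R..}" using R100 by auto
        show "B2 integrable_on {0..}" unfolding B2_def
          by (rule integrable_restrict_Int[THEN iffD2]) (unfold e, use f2i in \<open>auto simp: integrable_on_def\<close>)
        show "integral {0..} B2 = K2 * (R powr (a - 1) / (1 - a))"
          unfolding B2_def integral_restrict_Int e using f2i by (rule integral_unique)
      qed
      have "\<bar>F.V p \<xi>\<bar> \<le> integral {0..} (\<lambda>t. B1 t + B2 t)"
      proof (rule c(2)[OF xi(1)])
        show "(\<lambda>t. B1 t + B2 t) integrable_on {0..}" by (rule integrable_add[OF B1i B2i])
        fix t :: real
        show "0 \<le> B1 t + B2 t" if "t \<ge> 0"
        proof -
          have "B1 t \<ge> 0"
          proof (cases "t \<in> {T..R}")
            case True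
            then have "lam t > 0" "ln t \<ge> 1" "t > 0" using lampos[of t] ln_ge1[of t] T100 by auto
            then have "0 \<le> c * (lam t * ln t / t)" using c(1) True T100 by (intro mult_nonneg_nonneg divide_nonneg_nonneg) auto
            then show ?thesis using True unfolding B1_def by auto
          next
            case False then have "B1 t = 0" unfolding B1_def by meson
            then show ?thesis by simp
          qed
          moreover have "B2 t \<ge> 0" using K2 unfolding B2_def by auto
          ultimately show ?thesis by simp
        qed
        assume t: "t \<ge> T"
        have tp: "t > 0" and lt: "lam t > 0" and lnt: "ln t \<ge> 1" using T_facts[OF t] lampos ln_ge1[OF t] by auto
        have "0 \<le> c * (lam t * ln t / t)" using c(1) lt lnt tp t T100 by (intro mult_nonneg_nonneg divide_nonneg_nonneg) auto
        then have B1nn: "B1 t \<ge> 0" unfolding B1_def by auto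
        have B2nn: "B2 t \<ge> 0" using K2 unfolding B2_def by auto
        show "c * w t * min t (1 / \<xi>) \<le> B1 t + B2 t"
        proof (cases "t \<le> R")
          case True
          have "c * w t * min t (1 / \<xi>) = c * (lam t * ln t / t)"
            using True tp by (simp add: R_def[symmetric] w_def min_def power2_eq_square)
          also have "\<dots> = B1 t" using True t by (simp add: B1_def)
          finally show ?thesis using B2nn by simp
        next
          case False
          have mR: "min t (1 / \<xi>) = R" using False by (simp add: R_def[symmetric] min_def)
          have Rp: "R > 0" using R100 by simp
          have lam_le: "lam t \<le> lam R * (t / R) powr Cu" by (rule growth) (use True False in auto)
          have ln_le: "ln t \<le> 5 * ln R * (t / R) powr (1/4)" by (rule lnR_bound) (use True False in auto)
          have "w t \<le> (lam R * (t / R) powr Cu) * (5 * ln R * (t / R) powr (1/4)) / t ^ 2"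
            unfolding w_def using lam_le ln_le lt lnt by (intro divide_right_mono mult_mono) auto
          also have "\<dots> = 5 * lam R * ln R * ((t / R) powr a) / t ^ 2"
            by (simp add: a_def powr_add mult_ac)
          finally have wb: "w t \<le> 5 * lam R * ln R * ((t / R) powr a) / t ^ 2" .
          have "c * w t * min t (1 / \<xi>) \<le> c * (5 * lam R * ln R * ((t / R) powr a) / t ^ 2) * R"
            unfolding mR using wb c(1) Rp by (intro mult_right_mono mult_left_mono) auto
          also have "\<dots> = K2 * t powr (a - 2)"
          proof -
            have "(t / R) powr a = t powr a * R powr (- a)" using tp Rp
              by (simp only: powr_divide powr_minus) (simp add: divide_inverse)
            moreover have "t powr (a - 2) = t powr a / t ^ 2" using tp by (simp add: powr_diff powr_numeral)
            ultimately show ?thesis unfolding K2_def by (simp add: field_simps)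
          qed
          also have "\<dots> = B2 t" using False by (simp add: B2_def)
          finally show ?thesis using B1nn by simp
        qed
      qed
      also have "\<dots> = c * integral {T..R} (\<lambda>t. lam t * ln t / t) + K2 * (R powr (a - 1) / (1 - a))"
        using integral_add[OF B1i B2i] B1v B2v by simp
      also have "integral {T..R} (\<lambda>t. lam t * ln t / t) \<le> I"
      proof -
        have sub: "{T..R} \<subseteq> {100..R}" using T100 by auto
        have "\<forall>x\<in>{100..R}. 0 \<le> lam x * ln x / x" using gnn by blast
        from integral_subset_le[OF sub integrable_on_subinterval[OF gi sub] gi this] show ?thesis
          unfolding I_def .
      qed
      also have "K2 * (R powr (a - 1) / (1 - a)) = (5 * c / (1 - a)) * (lam R * ln R)"
      proof -
        have "R powr (- a) * R powr (a - 1) = R powr (-1)" using R100 by (simp add: powr_add[symmetric])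
        also have "\<dots> = 1 / R" using R100 by (simp add: powr_minus_divide)
        finally have e: "R powr (- a) * R powr (a - 1) = 1 / R" .
        have "K2 * (R powr (a - 1) / (1 - a)) = 5 * c * R * lam R * ln R * (R powr (- a) * R powr (a - 1)) / (1 - a)"
          unfolding K2_def by (simp add: field_simps)
        also have "\<dots> = (5 * c / (1 - a)) * (lam R * ln R)" unfolding e using R100 a by (simp add: field_simps)
        finally show ?thesis .
      qed
      finally have "\<bar>F.V p \<xi>\<bar> \<le> c * I + (5 * c / (1 - a)) * (lam R * ln R)" using c(1) by (simp add: mult_left_mono)
      also have "\<dots> \<le> Ck * I + Ck * (lam R * ln R)"
        using Ck1 I0 lamR lnR by (intro add_mono mult_right_mono) auto
      finally show ?thesis .
    next
      case False
      define B where "B t = (if t \<in> {T..} then c * R * w t else 0)" for t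
      have e: "{T..} \<inter> {0..} = {T..}" using T100 by auto
      have fi: "(\<lambda>t. c * R * w t) integrable_on {T..}" using integrable_cmul[OF wi, of "c * R"] by simp
      have Bi: "B integrable_on {0..}" unfolding B_def
        by (rule integrable_restrict_Int[THEN iffD2]) (unfold e, rule fi)
      have Bv: "integral {0..} B = c * R * IW" unfolding B_def integral_restrict_Int e IW_def by simp
      have "\<bar>F.V p \<xi>\<bar> \<le> integral {0..} B"
      proof (rule c(2)[OF xi(1) Bi])
        fix t :: real
        show "0 \<le> B t" if "t \<ge> 0" unfolding B_def using c(1) R100 wnn_w by (auto simp: wnn_def)
        assume t: "t \<ge> T"
        have "w t \<ge> 0" using wnn_w t by (auto simp: wnn_def)
        have "c * w t * min t R \<le> c * w t * R" using \<open>w t \<ge> 0\<close> c(1) by (intro mult_left_mono) auto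
        then show "c * w t * min t (1 / \<xi>) \<le> B t"
          using t by (simp add: B_def R_def[symmetric] mult_ac)
      qed
      also have "\<dots> = c * R * IW" by (rule Bv)
      also have "\<dots> \<le> c * T * IW" using False c(1) IW by (intro mult_right_mono mult_left_mono) auto
      also have "\<dots> = (c * T * IW / m0) * m0" using m0 by simp
      also have "\<dots> \<le> Ck * (lam R * ln R)"
      proof (rule mult_mono)
        show "m0 \<le> lam R * ln R" unfolding m0_def using x0(2)[of R] R100 False by (simp add: g_def)
      qed (use Ck1 c(1) T100 IW m0 lamR lnR in auto)
      also have "\<dots> \<le> Ck * I + Ck * (lam R * ln R)" using Ck1 c(1) I0 by (smt (verit) mult_nonneg_nonneg)
      finally show ?thesis .
    qed
    then show "\<bar>F.V p \<xi>\<bar> \<le> Ck * integral {100..1/\<xi>} (\<lambda>\<sigma>. lam \<sigma> * ln \<sigma> / \<sigma>) + Ck * lam (1/\<xi>) * ln (1/\<xi>)"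
      by (simp add: I_def R_def mult.assoc)
  qed
qed

lemma main_hctx:
  shows "(\<forall>k. \<forall>xi>0. nderiv k (v20_hat lam psi T) differentiable (at xi))
    \<and> (\<forall>k. \<exists>Ck. \<forall>xi. 0 < xi \<and> xi \<le> 1/100 \<longrightarrow>
          xi ^ k * \<bar>nderiv k (v20_hat lam psi T) xi\<bar>
            \<le> Ck * integral {100..1/xi} (\<lambda>\<sigma>. lam \<sigma> * ln \<sigma> / \<sigma>)
               + Ck * lam (1/xi) * ln (1/xi))
    \<and> (\<forall>k. \<forall>N::nat. N \<ge> 1 \<longrightarrow> (\<exists>CkN. \<forall>xi>1/100.
          xi ^ k * \<bar>nderiv k (v20_hat lam psi T) xi\<bar> \<le> CkN / xi ^ N))"
proof -
  interpret F: fourier T w by (rule fourier_w)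
  define h where "h = H_fun lam psi T"
  have sh: "F.symF h" using symF_h unfolding h_def .
  have veq: "v20_hat lam psi T = (\<lambda>\<xi>. (-1/pi) * F.V h \<xi>)"
    by (rule ext) (simp add: v20_hat_def F.V_def F.Gs_def h_def)
  have smV: "smooth_on {0<..} (F.V h)" unfolding smooth_on_def using F.V_differentiable[OF sh] by auto
  have nd: "nderiv k (v20_hat lam psi T) \<xi> = (-1/pi) * nderiv k (F.V h) \<xi>" if "\<xi> > 0" for k \<xi>
    unfolding veq by (rule nderiv_cmult[OF _ smV]) (use that in auto)
  have key: "\<exists>p. F.symF p \<and> (\<forall>\<xi>>0. \<xi> ^ k * \<bar>nderiv k (v20_hat lam psi T) \<xi>\<bar> \<le> \<bar>F.V p \<xi>\<bar>)" for k
  proof -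
    obtain p where p: "F.symF p" "\<And>\<xi>. \<xi> > 0 \<Longrightarrow> nderiv k (F.V h) \<xi> = F.V p \<xi> / \<xi> ^ k"
      using F.V_nderiv[of k] sh by blast
    have "\<xi> ^ k * \<bar>nderiv k (v20_hat lam psi T) \<xi>\<bar> \<le> \<bar>F.V p \<xi>\<bar>" if xi: "\<xi> > 0" for \<xi>
    proof -
      have "\<xi> ^ k * \<bar>nderiv k (v20_hat lam psi T) \<xi>\<bar> = \<bar>F.V p \<xi>\<bar> / pi"
        unfolding nd[OF xi] p(2)[OF xi] using xi by (simp add: abs_mult abs_divide)
      also have "\<dots> \<le> \<bar>F.V p \<xi>\<bar> / 1" using pi_gt3 by (intro divide_left_mono) auto
      finally show ?thesis by simp
    qed
    then show ?thesis using p(1) by blast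
  qed
  have P1: "\<forall>k. \<forall>xi>0. nderiv k (v20_hat lam psi T) differentiable (at xi)"
  proof -
    have "smooth_on {0<..} (\<lambda>\<xi>. (-1/pi) * F.V h \<xi>)" by (rule smooth_cmult[OF _ smV]) simp
    then show ?thesis unfolding veq smooth_on_def by simp
  qed
  have P2: "\<forall>k. \<exists>Ck. \<forall>xi. 0 < xi \<and> xi \<le> 1/100 \<longrightarrow>
          xi ^ k * \<bar>nderiv k (v20_hat lam psi T) xi\<bar>
            \<le> Ck * integral {100..1/xi} (\<lambda>\<sigma>. lam \<sigma> * ln \<sigma> / \<sigma>)
               + Ck * lam (1/xi) * ln (1/xi)"
  proof
    fix k
    obtain p where p: "F.symF p" "\<And>\<xi>. \<xi> > 0 \<Longrightarrow> \<xi> ^ k * \<bar>nderiv k (v20_hat lam psi T) \<xi>\<bar> \<le> \<bar>F.V p \<xi>\<bar>"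
      using key[of k] by blast
    obtain Ck where Ck: "\<And>\<xi>. 0 < \<xi> \<Longrightarrow> \<xi> \<le> 1/100 \<Longrightarrow>
     \<bar>F.V p \<xi>\<bar> \<le> Ck * integral {100..1/\<xi>} (\<lambda>\<sigma>. lam \<sigma> * ln \<sigma> / \<sigma>) + Ck * lam (1/\<xi>) * ln (1/\<xi>)"
      using small_bound[OF p(1)] by blast
    show "\<exists>Ck. \<forall>xi. 0 < xi \<and> xi \<le> 1/100 \<longrightarrow>
          xi ^ k * \<bar>nderiv k (v20_hat lam psi T) xi\<bar>
            \<le> Ck * integral {100..1/xi} (\<lambda>\<sigma>. lam \<sigma> * ln \<sigma> / \<sigma>)
               + Ck * lam (1/xi) * ln (1/xi)"
      using p(2) Ck by (meson order_trans)
  qed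
  have P3: "\<forall>k. \<forall>N::nat. N \<ge> 1 \<longrightarrow> (\<exists>CkN. \<forall>xi>1/100.
          xi ^ k * \<bar>nderiv k (v20_hat lam psi T) xi\<bar> \<le> CkN / xi ^ N)"
  proof (intro allI impI)
    fix k N :: nat
    obtain p where p: "F.symF p" "\<And>\<xi>. \<xi> > 0 \<Longrightarrow> \<xi> ^ k * \<bar>nderiv k (v20_hat lam psi T) \<xi>\<bar> \<le> \<bar>F.V p \<xi>\<bar>"
      using key[of k] by blast
    obtain c where c: "\<And>\<xi>. \<xi> > 0 \<Longrightarrow> \<bar>F.Gs p \<xi>\<bar> \<le> c / \<xi> ^ (2 * N)"
      using F.Gs_decay[of N] p(1) by blast
    have c0: "c \<ge> 0" using c[of 1] by simp
    show "\<exists>CkN. \<forall>xi>1/100. xi ^ k * \<bar>nderiv k (v20_hat lam psi T) xi\<bar> \<le> CkN / xi ^ N"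
    proof (intro exI[of _ "c * 100 ^ (N + 1)"] allI impI)
      fix \<xi> :: real assume xi: "\<xi> > 1/100"
      have xp: "\<xi> > 0" using xi by simp
      have "\<bar>F.V p \<xi>\<bar> = \<bar>F.Gs p \<xi>\<bar> / \<xi>" using xp by (simp add: F.V_def abs_divide)
      also have "\<dots> \<le> (c / \<xi> ^ (2 * N)) / \<xi>" using c[OF xp] xp by (intro divide_right_mono) auto
      also have "\<dots> = (c / \<xi> ^ N) * (1 / \<xi>) ^ (N + 1)"
      proof -
        have "\<xi> ^ (2 * N) = \<xi> ^ N * \<xi> ^ N" by (simp add: mult_2 power_add)
        then show ?thesis using xp by (simp add: field_simps power_add)
      qed
      also have "\<dots> \<le> (c / \<xi> ^ N) * 100 ^ (N + 1)"
      proof (rule mult_left_mono)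
        have "1 / \<xi> \<le> 100" using xi xp by (simp add: field_simps)
        then show "(1 / \<xi>) ^ (N + 1) \<le> 100 ^ (N + 1)" using xp by (intro power_mono) auto
      qed (use c0 xp in auto)
      also have "\<dots> = c * 100 ^ (N + 1) / \<xi> ^ N" by simp
      finally show "\<xi> ^ k * \<bar>nderiv k (v20_hat lam psi T) \<xi>\<bar> \<le> c * 100 ^ (N + 1) / \<xi> ^ N"
        using p(2)[OF xp] by linarith
    qed
  qed
  show ?thesis using P1 P2 P3 by blast
qed

end

theorem lemma4p4:
  fixes lam psi :: "real \<Rightarrow> real" and T nK nComm nK12 Crho :: real
  assumes "nK \<ge> 0" and "nComm \<ge> 0" and "nK12 \<ge> 0" and "Crho > 0"
    and "in_Lambda nK nComm nK12 Crho lam T"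
    and "smooth_on {0<..} psi"
    and "\<forall>x\<ge>0. 0 \<le> psi x \<and> psi x \<le> 1"
    and "\<forall>x. 0 \<le> x \<and> x \<le> T \<longrightarrow> psi x = 0"
    and "\<forall>x\<ge>2*T. psi x = 1"
  shows "(\<forall>k. \<forall>xi>0. nderiv k (v20_hat lam psi T) differentiable (at xi))
    \<and> (\<forall>k. \<exists>Ck. \<forall>xi. 0 < xi \<and> xi \<le> 1/100 \<longrightarrow>
          xi ^ k * \<bar>nderiv k (v20_hat lam psi T) xi\<bar>
            \<le> Ck * integral {100..1/xi} (\<lambda>\<sigma>. lam \<sigma> * ln \<sigma> / \<sigma>)
               + Ck * lam (1/xi) * ln (1/xi))
    \<and> (\<forall>k. \<forall>N::nat. N \<ge> 1 \<longrightarrow> (\<exists>CkN. \<forall>xi>1/100.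
          xi ^ k * \<bar>nderiv k (v20_hat lam psi T) xi\<bar> \<le> CkN / xi ^ N))"
proof -
  have L: "(\<forall>t>50. lam t > 0)" "smooth_on {50<..} lam" "T > 100" and
    ex: "\<exists>Cl Cu C2 (C :: nat \<Rightarrow> real).
        Cl \<ge> 0 \<and> Cu \<ge> 0 \<and> C2 \<ge> 0 \<and> (\<forall>k\<ge>3. C k \<ge> 0) \<and> C 2 = C2 \<and>
        (\<forall>t\<ge>T. - Cl / t \<le> nderiv 1 lam t / lam t \<and> nderiv 1 lam t / lam t \<le> Cu / t) \<and>
        (\<forall>k\<ge>2. \<forall>t\<ge>T. \<bar>nderiv k lam t\<bar> / lam t \<le> C k / t ^ k) \<and>
        (let M = max Cl Cu in
          Cu < 1/30 - Cl/5 \<and>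
          sqrt Crho * (179/267) *
            (M * (1 + 2 * nK) + M\<^sup>2 * (1/4 + 2 * nComm + nK\<^sup>2) + C2 * (1/2 + nK)
             + 4 * (M\<^sup>2 + C2/3 * (3 + 2 * pi\<^sup>2))) < 1/3 \<and>
          M < 1 / (3 * sqrt Crho) * (1513/1044) * (1 / (1 + 2 * nK12)))"
    using assms(5) unfolding in_Lambda_def by blast+
  obtain Cl Cu C2 and C :: "nat \<Rightarrow> real" where
    cl: "Cl \<ge> 0" and cu: "Cu \<ge> 0" and c2: "C2 \<ge> 0" and c3: "\<forall>k\<ge>3. C k \<ge> 0" and c22: "C 2 = C2"
    and q: "\<forall>t\<ge>T. - Cl / t \<le> nderiv 1 lam t / lam t \<and> nderiv 1 lam t / lam t \<le> Cu / t"
    and kb: "\<forall>k\<ge>2. \<forall>t\<ge>T. \<bar>nderiv k lam t\<bar> / lam t \<le> C k / t ^ k"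
    and cu30: "Cu < 1/30 - Cl/5"
    using ex unfolding Let_def by blast
  define D where "D k = (if k = 0 then 1 else if k = 1 then max Cl Cu else C k)" for k
  interpret hctx lam T Cl Cu D psi
  proof
    show "T > 100" by (rule L(3))
    show "\<And>t. t > 50 \<Longrightarrow> lam t > 0" using L(1) by blast
    show "smooth_on {50<..} lam" by (rule L(2))
    show "Cl \<ge> 0" "0 \<le> Cu" by (rule cl, rule cu)
    show "Cu < 1/2" using cu30 cl by linarith
    show "\<And>t. t \<ge> T \<Longrightarrow> - Cl / t \<le> nderiv 1 lam t / lam t" using q by blast
    show "\<And>t. t \<ge> T \<Longrightarrow> nderiv 1 lam t / lam t \<le> Cu / t" using q by blast
    show "\<And>k. D k \<ge> 0"
    proof -
      fix k show "D k \<ge> 0"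
        using cl cu c2 c22 c3 by (cases "k = 0"; cases "k = 1"; cases "k = 2") (auto simp: D_def)
    qed
    show "\<And>k t. t \<ge> T \<Longrightarrow> \<bar>nderiv k lam t\<bar> \<le> D k * lam t / t ^ k"
    proof -
      fix k t assume t: "t \<ge> T"
      have tp: "t > 0" and lp: "lam t > 0" using t L(1,3) by auto
      show "\<bar>nderiv k lam t\<bar> \<le> D k * lam t / t ^ k"
      proof (cases "k = 0")
        case True then show ?thesis using lp by (simp add: D_def)
      next
        case k0: False
        show ?thesis
        proof (cases "k = 1")
          case True
          have a: "- Cl / t \<le> nderiv 1 lam t / lam t" "nderiv 1 lam t / lam t \<le> Cu / t" using q t by auto
          have "\<bar>nderiv 1 lam t / lam t\<bar> \<le> max Cl Cu / t"
          proof -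
            have "Cu / t \<le> max Cl Cu / t" "Cl / t \<le> max Cl Cu / t" using tp by (auto intro: divide_right_mono)
            then show ?thesis using a by (simp add: abs_le_iff)
          qed
          then have "\<bar>nderiv 1 lam t\<bar> / lam t \<le> max Cl Cu / t" using lp by (simp add: abs_divide)
          then show ?thesis using True lp tp by (simp add: D_def field_simps)
        next
          case False
          then have "k \<ge> 2" using k0 by simp
          then have "\<bar>nderiv k lam t\<bar> / lam t \<le> C k / t ^ k" using kb t by blast
          then show ?thesis using k0 False lp tp by (simp add: D_def field_simps)
        qed
      qed
    qed
    show "smooth_on {0<..} psi" by (rule assms(6))
    show "\<forall>x\<ge>0. 0 \<le> psi x \<and> psi x \<le> 1" by (rule assms(7))
    show "\<forall>x. 0 \<le> x \<and> x \<le> T \<longrightarrow> psi x = 0" by (rule assms(8))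
    show "\<forall>x\<ge>2*T. psi x = 1" by (rule assms(9))
  qed
  show ?thesis by (rule main_hctx)
qed

end
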